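(* In the setting of a joint distribution $p(X,C)$ on finite $\mathcal X\times\mathcal C$, let $\epsilon>0$, $\Delta=\frac{\epsilon}{4(1+|\mathcal C|)}$ and let $J$ be a positive integer with $J\ge\frac{4(1+|\mathcal C|)}{\epsilon}\ln\frac{8(1+|\mathcal C|)}{\epsilon}$. For $x\in\mathcal X$ define $$\eta_1(\mathbf x)=\bigoplus_{j=1}^J\tau(p(x),w_j,j)\oplus\bigoplus_{j=1}^J\bigoplus_{c\in\mathcal C}\tau(p(c,x),w_j,j),\qquad \eta_2(\mathbf x)=\bigoplus_{j=1}^J\tau(p(x),w_j,j)\oplus\bigoplus_{j=1}^J\bigoplus_{c\in\mathcal C}\big(-\tau(p(c,x),w_j,j)\big),$$ where $p(x)=\sum_{c}p(c,x)$. Then for all $x,y\in\mathcal X$ with $x\ne y$, $\left|\mathrm{MIL}(\mathbf x,\mathbf y)-\langle\eta_1(\mathbf x),\eta_2(\mathbf y)\rangle\right|\le\epsilon$.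
   Context: $\mathbf x=[p(c,x)]_{c\in\mathcal C}$. $\mathrm{MIL}(\mathbf x,\mathbf y)=I(X;C)-I(\pi_{x,y}(X);C)$, where $\pi_{x,y}$ merges $x$ and $y$ into a single new value and fixes all other values. $\rho(w)=\frac{2\,\mathrm{sech}(\pi w)}{1+4w^2}$, $w_j=(j-\frac12)\Delta$, and for $u\in(0,1]$, $\tau(u,w,j)=\left[\cos(w\ln u)\sqrt{2u\int_{(j-1)\Delta}^{j\Delta}\rho},\ \sin(w\ln u)\sqrt{2u\int_{(j-1)\Delta}^{j\Delta}\rho}\right]\in\mathbb R^2$, with $\tau(0,w,j)=(0,0)$. $\bigoplus$ denotes concatenation and $\langle\cdot,\cdot\rangle$ the Euclidean inner product. *)

theory Defs
  imports "HOL-Analysis.Analysis"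
begin

text \<open>Joint distribution p(c,x) on finite C x X is a function p :: 'c => 'x => real.\<close>

definition marg_X :: "('c::finite \<Rightarrow> 'u \<Rightarrow> real) \<Rightarrow> 'u \<Rightarrow> real" where
  "marg_X q u = (\<Sum>c\<in>UNIV. q c u)"

definition marg_C :: "('c \<Rightarrow> 'u::finite \<Rightarrow> real) \<Rightarrow> 'c \<Rightarrow> real" where
  "marg_C q c = (\<Sum>u\<in>UNIV. q c u)"

definition mutual_inf :: "('c::finite \<Rightarrow> 'u::finite \<Rightarrow> real) \<Rightarrow> real" where
  "mutual_inf q = (\<Sum>u\<in>UNIV. \<Sum>c\<in>UNIV.
      if q c u = 0 then 0 else q c u * ln (q c u / (marg_X q u * marg_C q c)))"

text \<open>pi_{x,y}: merges x and y into the single new value None, and maps every other z to Some z.\<close>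
definition merge_map :: "'x \<Rightarrow> 'x \<Rightarrow> 'x \<Rightarrow> 'x option" where
  "merge_map x y z = (if z = x \<or> z = y then None else Some z)"

definition merged_dist :: "('c \<Rightarrow> 'x::finite \<Rightarrow> real) \<Rightarrow> 'x \<Rightarrow> 'x \<Rightarrow> 'c \<Rightarrow> 'x option \<Rightarrow> real" where
  "merged_dist p x y c u = (\<Sum>z\<in>{z. merge_map x y z = u}. p c z)"

definition MIL :: "('c::finite \<Rightarrow> 'x::finite \<Rightarrow> real) \<Rightarrow> 'x \<Rightarrow> 'x \<Rightarrow> real" where
  "MIL p x y = mutual_inf p - mutual_inf (merged_dist p x y)"

definition sech :: "real \<Rightarrow> real" where
  "sech t = 1 / cosh t"

definition rho :: "real \<Rightarrow> real" where
  "rho w = 2 * sech (pi * w) / (1 + 4 * w\<^sup>2)"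

definition wpt :: "real \<Rightarrow> nat \<Rightarrow> real" where
  "wpt \<Delta> j = (real j - 1/2) * \<Delta>"

text \<open>tau(u,w,j) in R^2, represented as a list of length 2.\<close>
definition tau :: "real \<Rightarrow> real \<Rightarrow> real \<Rightarrow> nat \<Rightarrow> real list" where
  "tau \<Delta> u w j =
     (if u = 0 then [0, 0]
      else [cos (w * ln u) * sqrt (2 * u * integral {(real j - 1) * \<Delta> .. real j * \<Delta>} rho),
            sin (w * ln u) * sqrt (2 * u * integral {(real j - 1) * \<Delta> .. real j * \<Delta>} rho)])"

text \<open>Concatenation is list append; the c-blocks are ordered by the enumeration of the finite type 'c.\<close>
definition eta1 :: "real \<Rightarrow> nat \<Rightarrow> ('c::enum \<Rightarrow> 'x \<Rightarrow> real) \<Rightarrow> 'x \<Rightarrow> real list" where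
  "eta1 \<Delta> J p x =
     concat (map (\<lambda>j. tau \<Delta> (\<Sum>c\<in>UNIV. p c x) (wpt \<Delta> j) j) [1..<J+1])
     @ concat (map (\<lambda>j. concat (map (\<lambda>c. tau \<Delta> (p c x) (wpt \<Delta> j) j) Enum.enum)) [1..<J+1])"

definition eta2 :: "real \<Rightarrow> nat \<Rightarrow> ('c::enum \<Rightarrow> 'x \<Rightarrow> real) \<Rightarrow> 'x \<Rightarrow> real list" where
  "eta2 \<Delta> J p x =
     concat (map (\<lambda>j. tau \<Delta> (\<Sum>c\<in>UNIV. p c x) (wpt \<Delta> j) j) [1..<J+1])
     @ concat (map (\<lambda>j. concat (map (\<lambda>c. map uminus (tau \<Delta> (p c x) (wpt \<Delta> j) j)) Enum.enum)) [1..<J+1])"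

definition list_inner :: "real list \<Rightarrow> real list \<Rightarrow> real" where
  "list_inner a b = sum_list (map2 (*) a b)"

end

theory Submission
  imports Defs "HOL-Complex_Analysis.Complex_Analysis"
begin
definition Dn :: "complex \<Rightarrow> complex" where
  "Dn z = exp (of_real pi * z) + exp (- (of_real pi * z))"

definition fc :: "real \<Rightarrow> complex \<Rightarrow> complex" where
  "fc t z = 2 * exp (\<i> * of_real t * z) / Dn z"

definition Sstrip :: "complex set" where
  "Sstrip = {z. Im z > -1/2} \<inter> {z. Im z < 3/2}"

lemma Dn_zero:
  assumes "Dn z = 0" "-1/2 < Im z" "Im z < 3/2"
  shows "z = \<i>/2"
proof -
  have e: "exp (of_real pi * z) = - exp (- (of_real pi * z))"
    using assms(1) unfolding Dn_def by (simp add: add_eq_0_iff)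
  have "exp (2 * of_real pi * z) = exp (of_real pi * z + of_real pi * z)"
    by (simp add: algebra_simps)
  also have "\<dots> = exp (of_real pi * z) * exp (of_real pi * z)"
    by (simp only: exp_add)
  also have "\<dots> = - (exp (- (of_real pi * z)) * exp (of_real pi * z))"
    using e by simp
  also have "\<dots> = -1" by (simp add: exp_add[symmetric])
  also have "\<dots> = exp (of_real pi * \<i>)" by simp
  finally obtain n :: int where n: "2 * of_real pi * z = of_real pi * \<i> + complex_of_real (real_of_int (2 * n) * pi) * \<i>"
    unfolding exp_eq by blast
  have "Im (2 * of_real pi * z) = Im (of_real pi * \<i> + complex_of_real (real_of_int (2 * n) * pi) * \<i>)"
    using n by simp
  hence "pi * (2 * Im z) = pi * (1 + 2 * n)" by (simp add: algebra_simps)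
  hence "2 * Im z = 1 + 2 * n" by simp
  hence im: "Im z = 1/2 + n" by simp
  have "Re (2 * of_real pi * z) = Re (of_real pi * \<i> + complex_of_real (real_of_int (2 * n) * pi) * \<i>)"
    using n by simp
  hence re: "Re z = 0" by simp
  from im assms(2,3) have "n = 0" by linarith
  with im re show ?thesis by (simp add: complex_eq_iff)
qed

lemma open_Sstrip: "open Sstrip"
  unfolding Sstrip_def by (intro open_Int open_halfspace_Im_gt open_halfspace_Im_lt)

lemma connected_Sstrip: "connected Sstrip"
  unfolding Sstrip_def by (intro convex_connected convex_Int convex_halfspace_Im_gt convex_halfspace_Im_lt)

lemma Dn_nz: "z \<in> Sstrip - {\<i>/2} \<Longrightarrow> Dn z \<noteq> 0"
  using Dn_zero unfolding Sstrip_def by auto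

lemma fc_holo: "fc t holomorphic_on (Sstrip - {\<i>/2})"
  unfolding fc_def Dn_def using Dn_nz unfolding Dn_def
  by (intro holomorphic_intros) auto

lemma Dn_deriv: "(Dn has_field_derivative (of_real pi * exp (of_real pi * z) - of_real pi * exp (- (of_real pi * z)))) (at z)"
  unfolding Dn_def by (auto intro!: derivative_eq_intros)

lemma exp_half_pi_i: "exp (of_real pi * (\<i>/2)) = \<i>"
proof -
  have "exp (of_real pi * (\<i>/2)) = cis (pi/2)" by (simp add: cis_conv_exp mult_ac)
  thus ?thesis by (simp add: cis.ctr complex_eq_iff)
qed

lemma exp_mhalf_pi_i: "exp (- (of_real pi * (\<i>/2))) = - \<i>"
proof -
  have "exp (- (of_real pi * (\<i>/2))) = cis (- (pi/2))" by (simp add: cis_conv_exp mult_ac)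
  thus ?thesis by (simp add: cis.ctr complex_eq_iff)
qed

lemma Dn_half: "Dn (\<i>/2) = 0"
  unfolding Dn_def using exp_half_pi_i exp_mhalf_pi_i by simp

lemma residue_fc: "residue (fc t) (\<i>/2) = exp (- of_real t / 2) / (of_real pi * \<i>)"
proof -
  let ?z0 = "\<i>/2"
  let ?d = "2 * of_real pi * \<i>"
  have "of_real pi * exp (of_real pi * ?z0) - of_real pi * exp (- (of_real pi * ?z0)) = ?d"
    by (simp only: exp_half_pi_i exp_mhalf_pi_i) simp
  hence dd: "(Dn has_field_derivative ?d) (at ?z0)"
    using Dn_deriv[of ?z0] by simp
  hence "((\<lambda>w. (Dn w - Dn ?z0) / (w - ?z0)) \<longlongrightarrow> ?d) (at ?z0)"
    by (simp add: has_field_derivative_iff)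
  hence l1: "((\<lambda>w. Dn w / (w - ?z0)) \<longlongrightarrow> ?d) (at ?z0)" by (simp add: Dn_half)
  have l2: "((\<lambda>w. inverse (Dn w / (w - ?z0))) \<longlongrightarrow> inverse ?d) (at ?z0)"
    by (rule tendsto_inverse[OF l1]) simp
  have l3: "((\<lambda>w. 2 * exp (\<i> * of_real t * w) * inverse (Dn w / (w - ?z0))) \<longlongrightarrow>
     2 * exp (\<i> * of_real t * ?z0) * inverse ?d) (at ?z0)"
    by (intro tendsto_intros l2)
  have "((\<lambda>w. fc t w * (w - ?z0)) \<longlongrightarrow> 2 * exp (\<i> * of_real t * ?z0) * inverse ?d) (at ?z0)"
    using l3 by (rule Lim_transform_eventually)
      (auto simp: eventually_at_filter fc_def field_simps)
  hence "residue (fc t) ?z0 = 2 * exp (\<i> * of_real t * ?z0) * inverse ?d"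
    by (intro residue_simple'[OF open_Sstrip _ fc_holo]) (auto simp: Sstrip_def)
  also have "\<dots> = exp (- of_real t / 2) / (of_real pi * \<i>)"
    by (simp add: field_simps)
  finally show ?thesis .
qed



lemma rect_integral:
  assumes N: "N > 0"
  shows "contour_integral (rectpath (Complex (-N) 0) (Complex N 1)) (fc t) = 2 * exp (- of_real t / 2)"
proof -
  let ?g = "rectpath (Complex (-N) 0) (Complex N 1)"
  have box: "\<i>/2 \<in> box (Complex (-N) 0) (Complex N 1)"
    using N by (auto simp: in_box_complex_iff)
  have pim: "path_image ?g = cbox (Complex (-N) 0) (Complex N 1) - box (Complex (-N) 0) (Complex N 1)"
    using N by (intro path_image_rectpath_cbox_minus_box) auto
  have sub: "path_image ?g \<subseteq> Sstrip - {\<i>/2}"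
    unfolding pim using box by (auto simp: in_cbox_complex_iff Sstrip_def)
  have homo: "\<forall>z. z \<notin> Sstrip \<longrightarrow> winding_number ?g z = 0"
  proof (intro allI impI)
    fix z assume "z \<notin> Sstrip"
    hence "z \<notin> cbox (Complex (-N) 0) (Complex N 1)"
      by (auto simp: in_cbox_complex_iff Sstrip_def)
    thus "winding_number ?g z = 0"
      using N by (intro winding_number_rectpath_outside) auto
  qed
  have "contour_integral ?g (fc t) = 2 * pi * \<i> * (\<Sum>p\<in>{\<i>/2}. winding_number ?g p * residue (fc t) p)"
    by (rule Residue_theorem[OF open_Sstrip connected_Sstrip _ fc_holo]) (use sub homo in auto)
  also have "\<dots> = 2 * pi * \<i> * residue (fc t) (\<i>/2)"
    using winding_number_rectpath[OF box] by simp
  also have "\<dots> = 2 * exp (- of_real t / 2)"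
    by (simp add: residue_fc field_simps)
  finally show ?thesis .
qed

lemma fc_top: "fc t (of_real x + \<i>) = - exp (- of_real t) * fc t (of_real x)"
proof -
  have e1: "exp (\<i> * of_real t * (of_real x + \<i>)) = exp (\<i> * of_real t * of_real x) * exp (- of_real t)"
    by (simp add: exp_add[symmetric] algebra_simps)
  have e2: "exp (of_real pi * (of_real x + \<i>)) = - exp (of_real pi * of_real x)"
    by (simp add: exp_add algebra_simps)
  have e3: "exp (- (of_real pi * (of_real x + \<i>))) = - exp (- (of_real pi * of_real x))"
  proof -
    have "exp (- (of_real pi * (of_real x + \<i>))) = exp (- (of_real pi * of_real x)) * exp (- (of_real pi * \<i>))"
      by (simp add: exp_add[symmetric] algebra_simps)
    also have "exp (- (of_real pi * \<i>)) = -1"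
      by (simp add: exp_minus)
    finally show ?thesis by simp
  qed
  have "Dn (of_real x + \<i>) = - Dn (of_real x)" unfolding Dn_def e2 e3 by simp
  then show ?thesis unfolding fc_def e1
    by (simp add: mult_ac)
qed



lemma cont_fc: "continuous_on (Sstrip - {\<i>/2}) (fc t)"
  using fc_holo holomorphic_on_imp_continuous_on by blast

lemma rect_sides:
  assumes N: "N > 0"
  shows "contour_integral (rectpath (Complex (-N) 0) (Complex N 1)) (fc t) =
     integral {-N..N} (\<lambda>x. fc t (of_real x)) + \<i> * integral {0..1} (\<lambda>y. fc t (Complex N y))
     - integral {-N..N} (\<lambda>x. fc t (of_real x + \<i>)) - \<i> * integral {0..1} (\<lambda>y. fc t (Complex (-N) y))"
proof -
  define a1 where "a1 = Complex (-N) 0"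
  define a2 where "a2 = Complex N 0"
  define a3 where "a3 = Complex N 1"
  define a4 where "a4 = Complex (-N) 1"
  have rp: "rectpath a1 a3 = linepath a1 a2 +++ linepath a2 a3 +++ linepath a3 a4 +++ linepath a4 a1"
    by (simp add: rectpath_def Let_def a1_def a2_def a3_def a4_def)
  have box: "\<i>/2 \<in> box a1 a3"
    using N by (auto simp: in_box_complex_iff a1_def a3_def)
  have pim: "path_image (rectpath a1 a3) = cbox a1 a3 - box a1 a3"
    using N by (intro path_image_rectpath_cbox_minus_box) (auto simp: a1_def a3_def)
  have sub: "path_image (rectpath a1 a3) \<subseteq> Sstrip - {\<i>/2}"
    unfolding pim using box by (auto simp: in_cbox_complex_iff Sstrip_def a1_def a3_def)
  have "path_image (rectpath a1 a3) = closed_segment a1 a2 \<union> (closed_segment a2 a3 \<union> (closed_segment a3 a4 \<union> closed_segment a4 a1))"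
    unfolding rp by (simp add: path_image_join)
  with sub have s1: "closed_segment a1 a2 \<subseteq> Sstrip - {\<i>/2}" and s2: "closed_segment a2 a3 \<subseteq> Sstrip - {\<i>/2}"
    and s3: "closed_segment a3 a4 \<subseteq> Sstrip - {\<i>/2}" and s4: "closed_segment a4 a1 \<subseteq> Sstrip - {\<i>/2}"
    by auto
  have c1: "continuous_on (closed_segment a1 a2) (fc t)" using s1 cont_fc continuous_on_subset by blast
  have c2: "continuous_on (closed_segment a2 a3) (fc t)" using s2 cont_fc continuous_on_subset by blast
  have c3: "continuous_on (closed_segment a3 a4) (fc t)" using s3 cont_fc continuous_on_subset by blast
  have c4: "continuous_on (closed_segment a4 a1) (fc t)" using s4 cont_fc continuous_on_subset by blast
  have c4': "continuous_on (closed_segment a1 a4) (fc t)" using c4 by (simp add: closed_segment_commute)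
  have "contour_integral (rectpath a1 a3) (fc t) = contour_integral (linepath a1 a2) (fc t) +
      (contour_integral (linepath a2 a3) (fc t) + (contour_integral (linepath a3 a4) (fc t) +
       contour_integral (linepath a4 a1) (fc t)))"
    unfolding rp using c1 c2 c3 c4 by (simp add: contour_integrable_continuous_linepath)
  also have "contour_integral (linepath a1 a2) (fc t) = integral {-N..N} (\<lambda>x. fc t (of_real x))"
    using N by (subst contour_integral_linepath_Reals_eq) (auto simp: a1_def a2_def complex_is_Real_iff)
  also have "contour_integral (linepath a2 a3) (fc t) = \<i> * integral {0..1} (\<lambda>y. fc t (Complex N y))"
    by (rule contour_integral_linepath_same_Re) (auto simp: a2_def a3_def)
  also have "contour_integral (linepath a4 a1) (fc t) = - contour_integral (linepath a1 a4) (fc t)"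
    using c4 contour_integral_reverse_linepath by blast
  also have "contour_integral (linepath a1 a4) (fc t) = \<i> * integral {0..1} (\<lambda>y. fc t (Complex (-N) y))"
    by (rule contour_integral_linepath_same_Re) (auto simp: a1_def a4_def)
  also have "contour_integral (linepath a3 a4) (fc t) = - contour_integral (linepath a4 a3) (fc t)"
    using c3 contour_integral_reverse_linepath by blast
  also have "linepath a4 a3 = (+) \<i> \<circ> linepath (of_real (-N)) (of_real N)"
    by (rule ext) (simp add: linepath_def complex_eq_iff a3_def a4_def algebra_simps)
  also have "contour_integral ((+) \<i> \<circ> linepath (of_real (-N)) (of_real N)) (fc t) =
      contour_integral (linepath (of_real (-N)) (of_real N)) (\<lambda>x. fc t (x + \<i>))"
    by (rule contour_integral_translate)
  also have "\<dots> = integral {-N..N} (\<lambda>x. fc t (of_real x + \<i>))"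
    using N by (subst contour_integral_linepath_Reals_eq) auto
  finally show ?thesis by (simp add: a1_def a3_def algebra_simps)
qed



definition qf :: "real \<Rightarrow> real \<Rightarrow> real" where
  "qf t x = 2 * cos (t * x) / (exp (pi * x) + exp (- (pi * x)))"

lemma Dn_norm_ge: "norm (Dn (Complex c y)) \<ge> exp (pi * \<bar>c\<bar>) - exp (- (pi * \<bar>c\<bar>))"
proof -
  have n1: "norm (exp (of_real pi * Complex c y)) = exp (pi * c)" by (simp add: norm_exp_eq_Re)
  have n2: "norm (exp (- (of_real pi * Complex c y))) = exp (- (pi * c))" by (simp add: norm_exp_eq_Re)
  show ?thesis
  proof (cases "c \<ge> 0")
    case True
    have "norm (exp (of_real pi * Complex c y)) - norm (exp (- (of_real pi * Complex c y))) \<le> norm (Dn (Complex c y))"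
      unfolding Dn_def by (rule norm_diff_ineq)
    thus ?thesis using True n1 n2 by simp
  next
    case False
    have "norm (exp (- (of_real pi * Complex c y))) - norm (exp (of_real pi * Complex c y)) \<le> norm (Dn (Complex c y))"
      unfolding Dn_def by (metis add.commute norm_diff_ineq)
    thus ?thesis using False n1 n2 by simp
  qed
qed

lemma fc_side_bound:
  assumes "\<bar>c\<bar> = N" "N > 0" "0 \<le> y" "y \<le> 1"
  shows "norm (fc t (Complex c y)) \<le> 2 * exp \<bar>t\<bar> / (exp (pi * N) - exp (- (pi * N)))"
proof -
  have pos: "exp (pi * N) - exp (- (pi * N)) > 0" using assms(2) by simp
  have "norm (2 * exp (\<i> * of_real t * Complex c y)) = 2 * exp (- (t * y))"
    by (simp add: norm_mult norm_exp_eq_Re)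
  also have "\<dots> \<le> 2 * exp \<bar>t\<bar>"
  proof -
    have "\<bar>t * y\<bar> \<le> \<bar>t\<bar>"
      using assms(3,4) mult_right_le_one_le[of "\<bar>t\<bar>" y] by (simp add: abs_mult)
    hence "- (t * y) \<le> \<bar>t\<bar>" by linarith
    thus ?thesis by simp
  qed
  finally have num: "norm (2 * exp (\<i> * of_real t * Complex c y)) \<le> 2 * exp \<bar>t\<bar>" .
  have den: "norm (Dn (Complex c y)) \<ge> exp (pi * N) - exp (- (pi * N))"
    using Dn_norm_ge[of c y] assms(1) by simp
  have "norm (fc t (Complex c y)) = norm (2 * exp (\<i> * of_real t * Complex c y)) / norm (Dn (Complex c y))"
    unfolding fc_def by (simp add: norm_divide)
  also have "\<dots> \<le> 2 * exp \<bar>t\<bar> / (exp (pi * N) - exp (- (pi * N)))"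
    by (rule frac_le) (use num den pos in auto)
  finally show ?thesis .
qed

lemma fc_real: "fc t (of_real x) = of_real (2 / (exp (pi * x) + exp (- (pi * x)))) * cis (t * x)"
proof -
  have "Dn (of_real x) = of_real (exp (pi * x) + exp (- (pi * x)))"
    unfolding Dn_def by (simp add: exp_of_real[symmetric])
  moreover have "exp (\<i> * of_real t * of_real x) = cis (t * x)"
    by (simp add: cis_conv_exp mult_ac)
  ultimately show ?thesis unfolding fc_def by (simp add: field_simps)
qed

lemma Re_fc_real: "Re (fc t (of_real x)) = qf t x"
  unfolding fc_real qf_def by (simp add: field_simps)

lemma cont_Complex: "continuous_on A (\<lambda>y. Complex c y)"
proof -
  have "(\<lambda>y. Complex c y) = (\<lambda>y. of_real c + \<i> * of_real y)" by (rule ext) (simp add: Complex_eq)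
  thus ?thesis by (auto intro!: continuous_intros)
qed

lemma sech_ft_approx:
  assumes N: "N > 0"
  shows "\<bar>(1 + exp (- t)) * integral {-N..N} (qf t) - 2 * exp (- t / 2)\<bar>
           \<le> 4 * exp \<bar>t\<bar> / (exp (pi * N) - exp (- (pi * N)))"
proof -
  define B where "B = integral {-N..N} (\<lambda>x. fc t (of_real x))"
  define R where "R = integral {0..1} (\<lambda>y. fc t (Complex N y))"
  define L where "L = integral {0..1} (\<lambda>y. fc t (Complex (-N) y))"
  define V where "V = 2 * exp \<bar>t\<bar> / (exp (pi * N) - exp (- (pi * N)))"
  have T: "integral {-N..N} (\<lambda>x. fc t (of_real x + \<i>)) = - exp (- of_real t) * B"
    unfolding B_def fc_top by simp
  have eq: "B + \<i> * R + exp (- of_real t) * B - \<i> * L = 2 * exp (- of_real t / 2)"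
    using rect_integral[OF N, of t] rect_sides[OF N, of t] T
    unfolding B_def[symmetric] R_def[symmetric] L_def[symmetric] by (simp add: algebra_simps)
  have "Re (B + \<i> * R + exp (- of_real t) * B - \<i> * L) = Re (2 * exp (- of_real t / 2))"
    using eq by simp
  moreover have "exp (- of_real t) = (of_real (exp (- t)) :: complex)" using exp_of_real[of "-t"] by simp
  moreover have "exp (- of_real t / 2) = (of_real (exp (- t / 2)) :: complex)"
  proof -
    have "- complex_of_real t / 2 = of_real (- t / 2)" by simp
    thus ?thesis by (simp only: exp_of_real)
  qed
  ultimately have eqr: "(1 + exp (- t)) * Re B - 2 * exp (- t / 2) = Im R - Im L"
    by (simp add: algebra_simps)
  have contr: "continuous_on {-N..N} (\<lambda>x. fc t (of_real x))"
    by (rule continuous_on_compose2[OF cont_fc continuous_on_of_real])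
       (auto simp: Sstrip_def complex_eq_iff)
  have "((\<lambda>x. fc t (of_real x)) has_integral B) {-N..N}"
    unfolding B_def using contr integrable_continuous_interval by blast
  hence "(qf t has_integral Re B) {-N..N}"
    using has_integral_Re[of "\<lambda>x. fc t (of_real x)"] by (simp add: Re_fc_real)
  hence ReB: "integral {-N..N} (qf t) = Re B" by (rule integral_unique)
  have bR: "norm R \<le> V"
  proof -
    have "continuous_on {0..1} (\<lambda>y. fc t (Complex N y))"
      by (rule continuous_on_compose2[OF cont_fc cont_Complex]) (use N in \<open>auto simp: Sstrip_def complex_eq_iff\<close>)
    hence "norm R \<le> V * (1 - 0)" unfolding R_def V_def
      by (intro integral_bound) (use fc_side_bound N in auto)
    thus ?thesis by simp
  qed
  have bL: "norm L \<le> V"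
  proof -
    have "continuous_on {0..1} (\<lambda>y. fc t (Complex (-N) y))"
      by (rule continuous_on_compose2[OF cont_fc cont_Complex]) (use N in \<open>auto simp: Sstrip_def complex_eq_iff\<close>)
    hence "norm L \<le> V * (1 - 0)" unfolding L_def V_def
      by (intro integral_bound) (use fc_side_bound N in auto)
    thus ?thesis by simp
  qed
  have "\<bar>Im R - Im L\<bar> \<le> norm R + norm L"
    using abs_Im_le_cmod[of R] abs_Im_le_cmod[of L] by linarith
  hence "\<bar>Im R - Im L\<bar> \<le> 2 * V" using bR bL by linarith
  thus ?thesis unfolding ReB eqr V_def by simp
qed

lemma sech_alt: "sech x = 2 / (exp x + exp (- x))"
  unfolding sech_def cosh_def by (simp add: divide_simps)

lemma exp_sum_pos: "exp x + exp (- x) > (0::real)"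
  by (simp add: add_pos_pos)

lemma sech_pos: "sech x > 0"
  unfolding sech_alt using exp_sum_pos[of x] by simp

lemma exp_sum_ge2: "exp x + exp (- x) \<ge> (2::real)"
proof -
  have "(exp (x/2) - exp (- x/2))^2 \<ge> 0" by simp
  moreover have "(exp (x/2) - exp (- x/2))^2 = exp x + exp (- x) - 2"
    by (simp add: power2_eq_square algebra_simps exp_add[symmetric])
  ultimately show ?thesis by linarith
qed

lemma exp_sum_nz [simp]: "exp x + exp (- x) \<noteq> (0::real)"
  using exp_sum_pos[of x] by simp

lemma sech_le1: "sech x \<le> 1"
  unfolding sech_alt using exp_sum_ge2[of x] by simp

lemma sech_exp_bound: "sech x \<le> 2 * exp (- x)"
proof -
  have "2 / (exp x + exp (- x)) \<le> 2 / exp x"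
    by (rule divide_left_mono) (auto simp: add_pos_pos)
  thus ?thesis unfolding sech_alt by (simp add: exp_minus field_simps)
qed

lemma cont_sech [continuous_intros]: "continuous_on A f \<Longrightarrow> continuous_on A (\<lambda>x. sech (f x))"
  unfolding sech_alt by (intro continuous_intros) auto

lemma ftc_real:
  assumes "a \<le> b" "\<And>x. x \<in> {a..b} \<Longrightarrow> (F has_real_derivative f x) (at x)"
  shows "(f has_integral (F b - F a)) {a..b}"
  by (rule fundamental_theorem_of_calculus)
     (use assms in \<open>auto simp: has_real_derivative_iff_has_vector_derivative[symmetric] intro: has_field_derivative_at_within\<close>)

lemma qf_eq: "qf t x = sech (pi * x) * cos (t * x)"
  unfolding qf_def sech_alt by simp

lemma qf_even: "qf t (- x) = qf t x"
  unfolding qf_def by (simp add: add.commute)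

lemma cont_qf: "continuous_on A (qf t)"
  unfolding qf_eq[abs_def] by (intro continuous_intros)

lemma qf_even_integral:
  assumes "N \<ge> 0"
  shows "integral {-N..N} (qf t) = 2 * integral {0..N} (qf t)"
proof -
  have int: "qf t integrable_on {-N..N}" using cont_qf integrable_continuous_interval by blast
  have "integral {-N..N} (qf t) = integral {-N..0} (qf t) + integral {0..N} (qf t)"
    using Henstock_Kurzweil_Integration.integral_combine[of "-N" 0 N "qf t"] int assms by simp
  moreover have "integral {-N..0} (qf t) = integral {0..N} (qf t)"
  proof -
    have "(qf t has_integral integral {0..N} (qf t)) {0..N}"
      using cont_qf integrable_continuous_interval integrable_integral by blast
    hence "((\<lambda>x. qf t (- x)) has_integral integral {0..N} (qf t)) {-N..-0}"
      using has_integral_reflect_real by blast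
    hence "(qf t has_integral integral {0..N} (qf t)) {-N..0}" by (simp add: qf_even)
    thus ?thesis by (rule integral_unique)
  qed
  ultimately show ?thesis by simp
qed

definition gN :: "real \<Rightarrow> real \<Rightarrow> real" where
  "gN N x = integral {0..N} (\<lambda>w. sech (pi * w) * cos (x * w))"

definition hh :: "real \<Rightarrow> real" where
  "hh x = 1 / (exp (x/2) + exp (- x/2))"

lemma gN_qf: "gN N t = integral {0..N} (qf t)"
  unfolding gN_def qf_eq by (simp add: mult.commute)

lemma hh_alt: "exp (- t / 2) / (1 + exp (- t)) = hh t"
proof -
  have "exp (t/2) * (1 + exp (- t)) = exp (t/2) + exp (- t/2)"
    by (simp add: algebra_simps exp_add[symmetric])
  moreover have "exp (- t / 2) * exp (t/2) = 1" by (simp add: exp_add[symmetric])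
  moreover have "exp (- t / 2) / (1 + exp (- t)) = (exp (- t / 2) * exp (t/2)) / (exp (t/2) * (1 + exp (- t)))"
    by (simp add: mult.commute)
  ultimately show ?thesis unfolding hh_def by simp
qed

lemma gN_approx1:
  assumes N: "N > 0"
  shows "\<bar>gN N t - hh t\<bar> \<le> 2 * exp \<bar>t\<bar> / (exp (pi * N) - exp (- (pi * N)))"
proof -
  define V where "V = 2 * exp \<bar>t\<bar> / (exp (pi * N) - exp (- (pi * N)))"
  have Vpos: "V \<ge> 0" unfolding V_def using N by simp
  have Y: "\<bar>(1 + exp (- t)) * (2 * gN N t) - 2 * exp (- t / 2)\<bar> \<le> 2 * V"
    using sech_ft_approx[OF N, of t] qf_even_integral[of N t] N unfolding gN_qf V_def by simp
  have hx: "(1 + exp (- t)) * hh t = exp (- t / 2)"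
  proof -
    have ne: "1 + exp (- t) > 0" by (intro add_pos_pos) auto
    show ?thesis unfolding hh_alt[symmetric] using ne by simp
  qed
  have "(1 + exp (- t)) * (gN N t - hh t) = ((1 + exp (- t)) * (2 * gN N t) - 2 * exp (- t / 2)) / 2"
    using hx by (simp add: algebra_simps)
  hence "\<bar>(1 + exp (- t)) * (gN N t - hh t)\<bar> = \<bar>(1 + exp (- t)) * (2 * gN N t) - 2 * exp (- t / 2)\<bar> / 2"
    by simp
  moreover have "\<And>X Y::real. Y \<le> 2 * V \<Longrightarrow> X = Y / 2 \<Longrightarrow> X \<le> V" by linarith
  ultimately have a: "\<bar>(1 + exp (- t)) * (gN N t - hh t)\<bar> \<le> V" using Y by blast
  have "\<bar>gN N t - hh t\<bar> \<le> (1 + exp (- t)) * \<bar>gN N t - hh t\<bar>"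
    using mult_right_mono[of 1 "1 + exp (- t)" "\<bar>gN N t - hh t\<bar>"] by simp
  also have "\<dots> \<le> V" using a by (simp add: abs_mult add_pos_pos)
  finally show ?thesis unfolding V_def .
qed

lemma integral_exp_tail:
  fixes N M :: real
  assumes "N \<le> M"
  shows "((\<lambda>w. 2 * exp (- w)) has_integral (2 * exp (- N) - 2 * exp (- M))) {N..M}"
proof -
  have "((\<lambda>w. 2 * exp (- w)) has_integral ((\<lambda>w. - 2 * exp (- w)) M - (\<lambda>w. - 2 * exp (- w)) N)) {N..M}"
    by (rule ftc_real[OF assms]) (auto intro!: derivative_eq_intros)
  thus ?thesis by simp
qed

lemma gN_tail:
  assumes "0 \<le> N" "N \<le> M"
  shows "\<bar>gN M t - gN N t\<bar> \<le> 2 * exp (- N)"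
proof -
  let ?f = "\<lambda>w. sech (pi * w) * cos (t * w)"
  have int: "?f integrable_on {0..M}"
    by (intro integrable_continuous_interval continuous_intros)
  have "gN M t = gN N t + integral {N..M} ?f"
    unfolding gN_def using Henstock_Kurzweil_Integration.integral_combine[of 0 N M ?f] int assms by simp
  moreover have "norm (integral {N..M} ?f) \<le> integral {N..M} (\<lambda>w. 2 * exp (- w))"
  proof (rule integral_norm_bound_integral)
    show "?f integrable_on {N..M}" by (intro integrable_continuous_interval continuous_intros)
    show "(\<lambda>w. 2 * exp (- w)) integrable_on {N..M}" using integral_exp_tail[OF assms(2)] by blast
    fix w assume w: "w \<in> {N..M}"
    have "\<bar>sech (pi * w) * cos (t * w)\<bar> \<le> sech (pi * w)"
      using sech_pos[of "pi*w"] by (simp add: abs_mult mult_left_le)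
    also have "\<dots> \<le> 2 * exp (- (pi * w))" by (rule sech_exp_bound)
    also have "\<dots> \<le> 2 * exp (- w)"
    proof -
      have "w \<ge> 0" using w assms by auto
      hence "w \<le> pi * w" using pi_gt3 by (simp add: mult_le_cancel_right1 less_imp_le order.trans[OF _ less_imp_le[OF pi_gt3]])
      thus ?thesis by simp
    qed
    finally show "norm (?f w) \<le> 2 * exp (- w)" by simp
  qed
  moreover have "integral {N..M} (\<lambda>w. 2 * exp (- w)) = 2 * exp (- N) - 2 * exp (- M)"
    using integral_exp_tail[OF assms(2)] by (rule integral_unique)
  moreover have "exp (- M) > 0" by simp
  ultimately show ?thesis by (simp only: real_norm_def; linarith)
qed

lemma den_limit: "((\<lambda>M. c / (exp (pi * M) - exp (- (pi * M)))) \<longlongrightarrow> 0) at_top"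
proof -
  have id: "filterlim (\<lambda>M::real. M) at_top at_top" by (simp add: filterlim_ident)
  have e1: "filterlim (\<lambda>M. exp (pi * M)) at_top at_top"
    by (rule filterlim_compose[OF exp_at_top filterlim_tendsto_pos_mult_at_top[OF tendsto_const pi_gt_zero id]])
  have e2: "((\<lambda>M. - exp (- (pi * M))) \<longlongrightarrow> - 0) at_top"
  proof -
    have "((\<lambda>M. inverse (exp (pi * M))) \<longlongrightarrow> 0) at_top"
      by (rule tendsto_inverse_0_at_top[OF e1])
    thus ?thesis by (intro tendsto_minus) (simp add: exp_minus)
  qed
  have "filterlim (\<lambda>M. - exp (- (pi * M)) + exp (pi * M)) at_top at_top"
    by (rule filterlim_tendsto_add_at_top[OF e2 e1])
  hence "filterlim (\<lambda>M. exp (pi * M) - exp (- (pi * M))) at_infinity at_top"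
    by (intro filterlim_at_top_imp_at_infinity) (simp add: add.commute)
  thus ?thesis by (intro tendsto_divide_0[OF tendsto_const])
qed

lemma gN_approx:
  assumes N: "N > 0"
  shows "\<bar>gN N t - hh t\<bar> \<le> 2 * exp (- N)"
proof -
  define V where "V = (\<lambda>M. 2 * exp \<bar>t\<bar> / (exp (pi * M) - exp (- (pi * M))))"
  have lim: "((\<lambda>M. 2 * exp (- N) + V M) \<longlongrightarrow> 2 * exp (- N) + 0) at_top"
    unfolding V_def by (intro tendsto_intros den_limit)
  have ev: "\<forall>\<^sub>F M in at_top. \<bar>gN N t - hh t\<bar> \<le> 2 * exp (- N) + V M"
    using eventually_ge_at_top[of N]
  proof eventually_elim
    case (elim M)
    have "\<bar>gN M t - gN N t\<bar> \<le> 2 * exp (- N)" using gN_tail[of N M t] elim N by simp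
    moreover have "\<bar>gN M t - hh t\<bar> \<le> V M" unfolding V_def using gN_approx1[of M t] elim N by simp
    ultimately show ?case by linarith
  qed
  from tendsto_lowerbound[OF lim ev] show ?thesis by simp
qed

definition Phi :: "real \<Rightarrow> real" where
  "Phi L = (exp (L/2) * (ln (exp (L/2) + exp (- L/2)) - L/2) + exp (- L/2) * (ln (exp (L/2) + exp (- L/2)) + L/2)) / 2"

definition Ia :: "real \<Rightarrow> real \<Rightarrow> real" where
  "Ia L s = - (exp (L/2) * ln (exp (L/2) + exp (- L/2) * exp (- s)) + exp (- L/2) * ln (exp (- L/2) + exp (L/2) * exp (- s)))"

lemma cont_hh [continuous_intros]: "continuous_on A f \<Longrightarrow> continuous_on A (\<lambda>x. hh (f x))"
  unfolding hh_def by (intro continuous_intros) auto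

lemma hh_shift: "exp (- s/2) * hh (s + c) = exp (- s) / (exp (c/2) + exp (- c/2) * exp (- s))"
proof -
  define u where "u = exp (s/2)"
  have u: "u > 0" unfolding u_def by simp
  have e0: "exp (s/2) * exp (- s/2) = 1" by (simp flip: exp_add)
  have e1: "exp (- s/2) = 1/u" using e0 u unfolding u_def by (simp add: field_simps)
  have e2: "exp (- s) = 1/(u*u)"
  proof -
    have "exp (- s) = exp (- s/2 + - s/2)" by simp
    also have "\<dots> = exp (- s/2) * exp (- s/2)" by (rule exp_add)
    finally show ?thesis using e1 by simp
  qed
  have e3: "exp ((s + c)/2) = u * exp (c/2)"
  proof -
    have "exp ((s + c)/2) = exp (s/2 + c/2)" by (simp add: add_divide_distrib)
    also have "\<dots> = exp (s/2) * exp (c/2)" by (rule exp_add)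
    finally show ?thesis unfolding u_def .
  qed
  have e4: "exp (- (s + c)/2) = exp (- c/2) / u"
  proof -
    have "exp (- (s + c)/2) = exp (- c/2 + - s/2)" by (simp add: add_divide_distrib)
    also have "\<dots> = exp (- c/2) * exp (- s/2)" by (rule exp_add)
    finally show ?thesis using e1 by simp
  qed
  have p: "exp (c/2) > 0" "exp (- c/2) > 0" by auto
  show ?thesis unfolding hh_def e1 e2 e3 e4
    using u p by (simp add: field_simps)
qed

lemma alg1: fixes a b e d1 d2 :: real assumes "a*b=1"
  shows "-(a*((b*(-e))/d1) + b*((a*(-e))/d2)) = e/d1 + e/d2"
proof -
  have 1: "a*((b*(-e))/d1) = -((a*b)*e/d1)" by (simp add: algebra_simps)
  have 2: "b*((a*(-e))/d2) = -((a*b)*e/d2)" by (simp add: algebra_simps)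
  show ?thesis unfolding 1 2 assms by simp
qed

lemma Ia_deriv: "(Ia L has_real_derivative exp (- s/2) * (hh (s + L) + hh (s - L))) (at s)"
proof -
  have A: "exp (L/2) * exp (- L/2) = 1" by (simp add: exp_add[symmetric])
  have p1: "exp (L/2) + exp (- L/2) * exp (- s) > 0" by (intro add_pos_pos) auto
  have p2: "exp (- L/2) + exp (L/2) * exp (- s) > 0" by (intro add_pos_pos) auto
  define A where "A = exp (L/2)"
  define B where "B = exp (- L/2)"
  have g1: "((\<lambda>s. A + B * exp (- s)) has_real_derivative B * (- exp (- s))) (at s)"
    by (auto intro!: derivative_eq_intros)
  have g2: "((\<lambda>s. B + A * exp (- s)) has_real_derivative A * (- exp (- s))) (at s)"
    by (auto intro!: derivative_eq_intros)
  have l1: "((\<lambda>s. ln (A + B * exp (- s))) has_real_derivative 1 / (A + B * exp (- s)) * (B * (- exp (- s)))) (at s)"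
    by (rule DERIV_chain2[OF DERIV_ln_divide g1]) (use p1 in \<open>simp add: A_def B_def\<close>)
  have l2: "((\<lambda>s. ln (B + A * exp (- s))) has_real_derivative 1 / (B + A * exp (- s)) * (A * (- exp (- s)))) (at s)"
    by (rule DERIV_chain2[OF DERIV_ln_divide g2]) (use p2 in \<open>simp add: A_def B_def\<close>)
  have "((\<lambda>s. - (A * ln (A + B * exp (- s)) + B * ln (B + A * exp (- s)))) has_real_derivative
     - (A * (1 / (A + B * exp (- s)) * (B * (- exp (- s)))) + B * (1 / (B + A * exp (- s)) * (A * (- exp (- s)))))) (at s)"
    by (intro DERIV_minus DERIV_add DERIV_cmult l1 l2)
  hence "(Ia L has_real_derivative
     - (exp (L/2) * ((exp (- L/2) * (- exp (- s))) / (exp (L/2) + exp (- L/2) * exp (- s))) +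
        exp (- L/2) * ((exp (L/2) * (- exp (- s))) / (exp (- L/2) + exp (L/2) * exp (- s))))) (at s)"
    unfolding Ia_def[abs_def] A_def[symmetric] B_def[symmetric] by simp
  moreover have "- (exp (L/2) * ((exp (- L/2) * (- exp (- s))) / (exp (L/2) + exp (- L/2) * exp (- s))) +
        exp (- L/2) * ((exp (L/2) * (- exp (- s))) / (exp (- L/2) + exp (L/2) * exp (- s))))
     = exp (- s) / (exp (L/2) + exp (- L/2) * exp (- s)) + exp (- s) / (exp (- L/2) + exp (L/2) * exp (- s))"
    using A by (rule alg1)
  moreover have "exp (- s/2) * (hh (s + L) + hh (s - L)) =
      exp (- s) / (exp (L/2) + exp (- L/2) * exp (- s)) + exp (- s) / (exp (- L/2) + exp (L/2) * exp (- s))"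
    using hh_shift[of s L] hh_shift[of s "- L"] by (simp add: distrib_left)
  ultimately show ?thesis by simp
qed

lemma Ia_integral:
  assumes "0 \<le> M"
  shows "((\<lambda>s. exp (- s/2) * (hh (s + L) + hh (s - L))) has_integral (Ia L M - Ia L 0)) {0..M}"
  by (rule ftc_real[OF assms]) (rule Ia_deriv)

lemma Ia_limit: "((\<lambda>M. Ia L M - Ia L 0) \<longlongrightarrow> 2 * Phi L) at_top"
proof -
  have e: "((\<lambda>M::real. exp (- M)) \<longlongrightarrow> 0) at_top"
    using tendsto_inverse_0_at_top[OF exp_at_top] by (simp add: exp_minus[symmetric])
  have "((\<lambda>M. Ia L M - Ia L 0) \<longlongrightarrow>
     - (exp (L/2) * ln (exp (L/2) + exp (- L/2) * 0) + exp (- L/2) * ln (exp (- L/2) + exp (L/2) * 0)) - Ia L 0) at_top"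
    unfolding Ia_def by (intro tendsto_intros e) auto
  moreover have "- (exp (L/2) * ln (exp (L/2) + exp (- L/2) * 0) + exp (- L/2) * ln (exp (- L/2) + exp (L/2) * 0)) - Ia L 0
     = 2 * Phi L"
  proof -
    define A where "A = exp (L/2)"
    define B where "B = exp (- L/2)"
    define C where "C = ln (A + B)"
    have i0: "Ia L 0 = - (A * C + B * C)" unfolding Ia_def A_def B_def C_def by (simp add: add.commute)
    have i1: "- (exp (L/2) * ln (exp (L/2) + exp (- L/2) * 0) + exp (- L/2) * ln (exp (- L/2) + exp (L/2) * 0)) = - (A * (L/2) - B * (L/2))"
      unfolding A_def B_def by simp
    have i2: "2 * Phi L = A * (C - L/2) + B * (C + L/2)" unfolding Phi_def A_def B_def C_def by simp
    show ?thesis unfolding i0 i1 i2 by (simp add: algebra_simps)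
  qed
  ultimately show ?thesis by simp
qed



definition Fb :: "real \<Rightarrow> real \<Rightarrow> real \<Rightarrow> real" where
  "Fb L s w = exp (- s/2) * (sech (pi * w) * (2 * cos (s * w) * cos (L * w)))"

definition Gs :: "real \<Rightarrow> real \<Rightarrow> real" where
  "Gs w s = exp (- s/2) * (w * sin (s * w) - cos (s * w) / 2) / (1/4 + w^2)"

lemma cont_Fb: "continuous_on S (\<lambda>z. Fb L (fst z) (snd z))"
  unfolding Fb_def by (intro continuous_intros) auto

lemma inner_w:
  "integral {0..N} (Fb L s) = exp (- s/2) * (gN N (s + L) + gN N (s - L))"
proof -
  have eq: "Fb L s w = exp (- s/2) * (sech (pi * w) * cos ((s + L) * w) + sech (pi * w) * cos ((s - L) * w))" for w
    unfolding Fb_def by (simp add: distrib_right left_diff_distrib cos_add cos_diff algebra_simps)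
  have i1: "(\<lambda>w. sech (pi * w) * cos ((s + L) * w)) integrable_on {0..N}"
    by (intro integrable_continuous_interval continuous_intros)
  have i2: "(\<lambda>w. sech (pi * w) * cos ((s - L) * w)) integrable_on {0..N}"
    by (intro integrable_continuous_interval continuous_intros)
  show ?thesis unfolding eq integral_mult_right gN_def
    by (subst integral_add[OF i1 i2]) simp
qed

lemma Gs_deriv: "((Gs w) has_real_derivative exp (- s/2) * cos (s * w)) (at s)"
proof -
  have "1/4 + w^2 > 0" by (intro add_pos_nonneg) auto
  hence nz: "1/4 + w^2 \<noteq> 0" by simp
  have "((\<lambda>s. exp (- s/2) * (w * sin (s * w) - cos (s * w) / 2)) has_real_derivative
          exp (- s/2) * cos (s * w) * (1/4 + w^2)) (at s)"
    by (auto intro!: derivative_eq_intros simp: field_simps power2_eq_square)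
  from DERIV_cdivide[OF this, of "1/4 + w^2"]
  show ?thesis unfolding Gs_def[abs_def] using nz by simp
qed

lemma inner_s:
  assumes "0 \<le> M"
  shows "integral {0..M} (\<lambda>s. Fb L s w) = sech (pi * w) * (2 * cos (L * w)) * (2 / (1 + 4 * w^2) + Gs w M)"
proof -
  have h: "((\<lambda>s. exp (- s/2) * cos (s * w)) has_integral (Gs w M - Gs w 0)) {0..M}"
    by (rule ftc_real[OF assms]) (rule Gs_deriv)
  have g0: "Gs w 0 = - (2 / (1 + 4 * w^2))"
    unfolding Gs_def by (simp add: field_simps)
  have "Fb L s w = sech (pi * w) * (2 * cos (L * w)) * (exp (- s/2) * cos (s * w))" for s
    unfolding Fb_def by (simp add: algebra_simps)
  hence "integral {0..M} (\<lambda>s. Fb L s w) = sech (pi * w) * (2 * cos (L * w)) * integral {0..M} (\<lambda>s. exp (- s/2) * cos (s * w))"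
    by simp
  also have "integral {0..M} (\<lambda>s. exp (- s/2) * cos (s * w)) = Gs w M - Gs w 0"
    using h by (rule integral_unique)
  finally show ?thesis unfolding g0 by (simp add: algebra_simps)
qed

lemma Gs_bound: "\<bar>Gs w M\<bar> \<le> 4 * exp (- M/2)"
proof -
  have p: "1/4 + w^2 > 0" by (intro add_pos_nonneg) auto
  have n: "\<bar>w * sin (M * w) - cos (M * w) / 2\<bar> \<le> \<bar>w\<bar> + 1/2"
  proof -
    have "\<bar>w * sin (M * w)\<bar> \<le> \<bar>w\<bar>" by (simp add: abs_mult mult_left_le)
    moreover have "\<bar>cos (M * w) / 2\<bar> \<le> 1/2" by simp
    ultimately show ?thesis by linarith
  qed
  have k: "\<bar>w\<bar> + 1/2 \<le> 4 * (1/4 + w^2)"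
  proof -
    have "(2 * \<bar>w\<bar> - 1/4)^2 \<ge> 0" by simp
    moreover have "\<bar>w\<bar>^2 = w^2" by simp
    ultimately show ?thesis by (simp add: power2_eq_square algebra_simps)
  qed
  have "\<bar>Gs w M\<bar> = exp (- M/2) * (\<bar>w * sin (M * w) - cos (M * w) / 2\<bar> / (1/4 + w^2))"
    unfolding Gs_def using p by (simp add: abs_mult abs_divide)
  also have "\<dots> \<le> exp (- M/2) * 4"
  proof (rule mult_left_mono)
    show "\<bar>w * sin (M * w) - cos (M * w) / 2\<bar> / (1/4 + w^2) \<le> 4"
      using n k p by (simp add: divide_le_eq)
  qed simp
  finally show ?thesis by simp
qed



lemma exp_neg_lin: assumes "c > 0" shows "((\<lambda>M::real. exp (- (c * M))) \<longlongrightarrow> 0) at_top"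
proof -
  have id: "filterlim (\<lambda>M::real. M) at_top at_top" by (simp add: filterlim_ident)
  have e1: "filterlim (\<lambda>M. exp (c * M)) at_top at_top"
    by (rule filterlim_compose[OF exp_at_top filterlim_tendsto_pos_mult_at_top[OF tendsto_const assms id]])
  show ?thesis using tendsto_inverse_0_at_top[OF e1] by (simp add: exp_minus)
qed

lemma exp_half_integral:
  fixes M :: real assumes "0 \<le> M"
  shows "((\<lambda>s. exp (- s/2)) has_integral (2 - 2 * exp (- M/2))) {0..M}"
proof -
  have "((\<lambda>s. exp (- s/2)) has_integral ((\<lambda>s. - 2 * exp (- s/2)) M - (\<lambda>s. - 2 * exp (- s/2)) 0)) {0..M}"
    by (rule ftc_real[OF assms]) (auto intro!: derivative_eq_intros)
  thus ?thesis by simp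
qed

lemma pos_quad: "1 + 4 * (w::real)^2 > 0" by (intro add_pos_nonneg) auto

lemma quad_nz [simp]: "1 + 4 * (w::real)^2 \<noteq> 0"
  using pos_quad[of w] by linarith

lemma cont_rho [continuous_intros]: "continuous_on A f \<Longrightarrow> continuous_on A (\<lambda>x. rho (f x))"
  unfolding rho_def by (intro continuous_intros) auto

lemma cont_Gs: "continuous_on A (\<lambda>w. Gs w M)"
proof -
  have "\<forall>w. 1/4 + w^2 \<noteq> (0::real)"
  proof
    fix w :: real have "1/4 + w^2 > 0" by (intro add_pos_nonneg) auto
    thus "1/4 + w^2 \<noteq> 0" by simp
  qed
  thus ?thesis unfolding Gs_def by (intro continuous_intros) auto
qed

lemma Phi_approx_M:
  assumes N: "N > 0" and M: "M \<ge> 0"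
  shows "\<bar>(Ia L M - Ia L 0) - 2 * integral {0..N} (\<lambda>w. rho w * cos (L * w))\<bar> \<le> 8 * exp (- N) + 8 * N * exp (- M/2)"
proof -
  define X where "X = integral {0..N} (\<lambda>w. rho w * cos (L * w))"
  define P where "P = (\<lambda>s. integral {0..N} (Fb L s))"
  have fe: "(\<lambda>(x,y). Fb L x y) = (\<lambda>z. Fb L (fst z) (snd z))" by (rule ext) (simp add: case_prod_beta)
  have cont: "continuous_on (cbox (0,0) (M,N)) (\<lambda>(x,y). Fb L x y)"
    unfolding fe by (rule cont_Fb)
  have Pint: "P integrable_on {0..M}"
    using integral_integrable_2dim[OF cont] unfolding P_def by (simp add: cbox_interval)
  have swap: "integral {0..M} P = integral {0..N} (\<lambda>w. integral {0..M} (\<lambda>s. Fb L s w))"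
    using integral_swap_continuous[OF cont] unfolding P_def by (simp add: cbox_interval)
  also have "\<dots> = integral {0..N} (\<lambda>w. 2 * (rho w * cos (L * w)) + sech (pi * w) * (2 * cos (L * w)) * Gs w M)"
  proof (rule integral_cong)
    fix w assume "w \<in> {0..N}"
    have "1 + 4 * w^2 \<noteq> 0" using pos_quad[of w] by simp
    thus "integral {0..M} (\<lambda>s. Fb L s w) = 2 * (rho w * cos (L * w)) + sech (pi * w) * (2 * cos (L * w)) * Gs w M"
      unfolding inner_s[OF M] rho_def by (simp add: field_simps)
  qed
  also have "\<dots> = 2 * X + integral {0..N} (\<lambda>w. sech (pi * w) * (2 * cos (L * w)) * Gs w M)"
  proof -
    have i1: "(\<lambda>w. 2 * (rho w * cos (L * w))) integrable_on {0..N}"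
      by (intro integrable_continuous_interval continuous_intros)
    have i2: "(\<lambda>w. sech (pi * w) * (2 * cos (L * w)) * Gs w M) integrable_on {0..N}"
      by (intro integrable_continuous_interval continuous_intros cont_Gs)
    show ?thesis unfolding X_def by (simp add: integral_add[OF i1 i2])
  qed
  finally have Q: "integral {0..M} P = 2 * X + integral {0..N} (\<lambda>w. sech (pi * w) * (2 * cos (L * w)) * Gs w M)" .
  have B1: "\<bar>integral {0..N} (\<lambda>w. sech (pi * w) * (2 * cos (L * w)) * Gs w M)\<bar> \<le> 8 * exp (- M/2) * (N - 0)"
    unfolding real_norm_def[symmetric]
  proof (rule integral_bound)
    show "0 \<le> N" using N by simp
    show "continuous_on {0..N} (\<lambda>w. sech (pi * w) * (2 * cos (L * w)) * Gs w M)"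
      by (intro continuous_intros cont_Gs)
    fix w assume "w \<in> {0..N}"
    have "\<bar>sech (pi * w)\<bar> \<le> 1" using sech_le1 sech_pos[of "pi * w"] by simp
    moreover have "\<bar>2 * cos (L * w)\<bar> \<le> 2" by (simp add: abs_mult)
    moreover have "\<bar>Gs w M\<bar> \<le> 4 * exp (- M/2)" by (rule Gs_bound)
    ultimately have "\<bar>sech (pi * w)\<bar> * \<bar>2 * cos (L * w)\<bar> * \<bar>Gs w M\<bar> \<le> 1 * 2 * (4 * exp (- M/2))"
      by (intro mult_mono) auto
    thus "norm (sech (pi * w) * (2 * cos (L * w)) * Gs w M) \<le> 8 * exp (- M/2)"
      by (simp add: abs_mult)
  qed
  have Hint: "((\<lambda>s. exp (- s/2) * (hh (s + L) + hh (s - L))) has_integral (Ia L M - Ia L 0)) {0..M}"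
    by (rule Ia_integral[OF M])
  have B2: "\<bar>integral {0..M} P - (Ia L M - Ia L 0)\<bar> \<le> 8 * exp (- N)"
  proof -
    have "integral {0..M} P - (Ia L M - Ia L 0) = integral {0..M} (\<lambda>s. P s - exp (- s/2) * (hh (s + L) + hh (s - L)))"
      using integral_diff[OF Pint has_integral_integrable[OF Hint]] integral_unique[OF Hint] by simp
    also have "norm \<dots> \<le> integral {0..M} (\<lambda>s. 4 * exp (- N) * exp (- s/2))"
    proof (rule integral_norm_bound_integral)
      show "(\<lambda>s. P s - exp (- s/2) * (hh (s + L) + hh (s - L))) integrable_on {0..M}"
        by (rule integrable_diff[OF Pint has_integral_integrable[OF Hint]])
      show "(\<lambda>s. 4 * exp (- N) * exp (- s/2)) integrable_on {0..M}"
        by (intro integrable_continuous_interval continuous_intros) auto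
      fix s assume "s \<in> {0..M}"
      have "P s - exp (- s/2) * (hh (s + L) + hh (s - L)) = exp (- s/2) * ((gN N (s + L) - hh (s + L)) + (gN N (s - L) - hh (s - L)))"
        unfolding P_def inner_w by (simp add: algebra_simps)
      moreover have "\<bar>(gN N (s + L) - hh (s + L)) + (gN N (s - L) - hh (s - L))\<bar> \<le> 4 * exp (- N)"
        using gN_approx[OF N, of "s + L"] gN_approx[OF N, of "s - L"] by linarith
      ultimately show "norm (P s - exp (- s/2) * (hh (s + L) + hh (s - L))) \<le> 4 * exp (- N) * exp (- s/2)"
        by (simp add: abs_mult mult.commute)
    qed
    also have "integral {0..M} (\<lambda>s. 4 * exp (- N) * exp (- s/2)) = 4 * exp (- N) * (2 - 2 * exp (- M/2))"
      using integral_unique[OF exp_half_integral[OF M]] by simp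
    also have "\<dots> \<le> 8 * exp (- N)"
      by (simp add: algebra_simps)
    finally show ?thesis by simp
  qed
  have "8 * exp (- M/2) * (N - 0) = 8 * N * exp (- M/2)" by simp
  then show ?thesis unfolding X_def[symmetric] using Q B1 B2 by linarith
qed

lemma Phi_approx:
  assumes N: "N > 0"
  shows "\<bar>Phi L - integral {0..N} (\<lambda>w. rho w * cos (L * w))\<bar> \<le> 4 * exp (- N)"
proof -
  define X where "X = integral {0..N} (\<lambda>w. rho w * cos (L * w))"
  have l1: "((\<lambda>M. \<bar>(Ia L M - Ia L 0) - 2 * X\<bar>) \<longlongrightarrow> \<bar>2 * Phi L - 2 * X\<bar>) at_top"
    by (intro tendsto_intros Ia_limit)
  have l2: "((\<lambda>M. 8 * exp (- N) + 8 * N * exp (- ((1/2) * M))) \<longlongrightarrow> 8 * exp (- N) + 8 * N * 0) at_top"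
    by (intro tendsto_intros exp_neg_lin) simp
  have ev: "\<forall>\<^sub>F M in at_top. \<bar>(Ia L M - Ia L 0) - 2 * X\<bar> \<le> 8 * exp (- N) + 8 * N * exp (- ((1/2) * M))"
    using eventually_ge_at_top[of 0]
  proof eventually_elim
    case (elim M) thus ?case using Phi_approx_M[OF N elim, of L] unfolding X_def by simp
  qed
  have "\<bar>2 * Phi L - 2 * X\<bar> \<le> 8 * exp (- N) + 8 * N * 0"
    by (rule tendsto_le[OF _ l2 l1 ev]) simp
  thus ?thesis unfolding X_def by simp
qed

definition gl :: "real \<Rightarrow> real" where "gl t = t * ln t"

definition Kf :: "real \<Rightarrow> real \<Rightarrow> real" where "Kf a b = gl (a + b) - gl a - gl b"

lemma K_identity:
  assumes a: "a > 0" and b: "b > 0"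
  shows "2 * sqrt (a * b) * Phi (ln a - ln b) = Kf a b"
proof -
  define x where "x = sqrt a"
  define y where "y = sqrt b"
  have x: "x > 0" and y: "y > 0" using a b by (auto simp: x_def y_def)
  have ax: "a = x^2" and by': "b = y^2" using a b by (auto simp: x_def y_def)
  have lna: "ln a = 2 * ln x" unfolding ax using x by (simp add: ln_realpow)
  have lnb: "ln b = 2 * ln y" unfolding by' using y by (simp add: ln_realpow)
  define L where "L = ln a - ln b"
  have hL: "L/2 = ln x - ln y" unfolding L_def lna lnb by simp
  have e1: "exp (L/2) = x / y" unfolding hL using x y by (simp add: exp_diff)
  have e2: "exp (- (L/2)) = y / x" unfolding hL using x y by (simp add: exp_diff)
  have s: "x / y + y / x = (x^2 + y^2) / (x * y)" using x y by (simp add: field_simps power2_eq_square)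
  have e3: "ln (x / y + y / x) = ln (x^2 + y^2) - ln x - ln y"
    unfolding s using x y by (simp add: ln_div ln_mult add_pos_pos)
  have sab: "sqrt (a * b) = x * y" unfolding x_def y_def by (simp add: real_sqrt_mult)
  have e2': "exp (- L/2) = y / x" using e2 by simp
  have P: "Phi L = ((x / y) * (ln (x / y + y / x) - (ln x - ln y)) + (y / x) * (ln (x / y + y / x) + (ln x - ln y))) / 2"
    apply (unfold Phi_def)
    apply (unfold e1 e2')
    apply (unfold hL)
    apply (rule refl)
    done
  have "2 * sqrt (a * b) * Phi L = x * y * ((x / y) * (ln (x^2 + y^2) - ln x - ln y - (ln x - ln y))
       + (y / x) * (ln (x^2 + y^2) - ln x - ln y + (ln x - ln y)))"
    unfolding P sab e3 by simp
  also have "\<dots> = x^2 * (ln (x^2 + y^2) - 2 * ln x) + y^2 * (ln (x^2 + y^2) - 2 * ln y)"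
    using x y by (simp add: field_simps power2_eq_square)
  also have "\<dots> = Kf a b"
    unfolding Kf_def gl_def ax by' using x y by (simp add: ln_realpow algebra_simps)
  finally show ?thesis unfolding L_def .
qed

lemma sqrt_ln_bound:
  assumes a: "a > 0" and b: "b > 0"
  shows "sqrt (a * b) * \<bar>ln a - ln b\<bar> \<le> 2 * (a + b)"
proof -
  have main: "sqrt (u * v) * (ln u - ln v) \<le> 2 * u" if u: "u > 0" and v: "v > 0" and uv: "v \<le> u" for u v
  proof -
    define x where "x = sqrt u"
    define y where "y = sqrt v"
    have x: "x > 0" and y: "y > 0" using u v by (auto simp: x_def y_def)
    have yx: "y \<le> x" unfolding x_def y_def using uv by simp
    have lnu: "ln u - ln v = 2 * ln (x / y)"
      using u v x y by (simp add: x_def y_def ln_div ln_sqrt)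
    have "ln (x / y) \<le> x / y - 1" using x y by (intro ln_le_minus_one) simp
    hence "x * y * ln (x / y) \<le> x * y * (x / y - 1)" using x y by (intro mult_left_mono) auto
    also have "\<dots> = x * (x - y)" using y by (simp add: field_simps)
    also have "\<dots> \<le> x * x" using x y by (simp add: mult_left_mono)
    finally have "x * y * ln (x / y) \<le> x * x" .
    moreover have "sqrt (u * v) = x * y" unfolding x_def y_def by (simp add: real_sqrt_mult)
    moreover have "x * x = u" unfolding x_def using u by simp
    ultimately show ?thesis unfolding lnu by simp
  qed
  show ?thesis
  proof (cases "b \<le> a")
    case True
    have "ln b \<le> ln a" using True b by simp
    hence "\<bar>ln a - ln b\<bar> = ln a - ln b" by simp
    thus ?thesis using main[OF a b True] b by simp
  next
    case False
    have "ln a \<le> ln b" using False a by simp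
    hence "\<bar>ln a - ln b\<bar> = ln b - ln a" by simp
    thus ?thesis using main[OF b a] False a by (simp add: mult.commute)
  qed
qed

lemma sqrt_le_sum: "a \<ge> 0 \<Longrightarrow> b \<ge> 0 \<Longrightarrow> 2 * sqrt (a * b) \<le> a + b"
  using arith_geo_mean_sqrt[of a b] by simp

lemma abs_cos_diff: "\<bar>cos u - cos v\<bar> \<le> \<bar>u - v::real\<bar>"
proof -
  have "\<bar>cos u - cos v\<bar> = 2 * \<bar>sin ((u + v) / 2)\<bar> * \<bar>sin ((v - u) / 2)\<bar>"
    by (simp add: cos_diff_cos abs_mult)
  also have "\<dots> \<le> 2 * 1 * \<bar>(v - u) / 2\<bar>"
    by (intro mult_mono abs_sin_x_le_abs_x) auto
  finally show ?thesis by simp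
qed



lemma rho_nonneg: "rho w \<ge> 0"
  unfolding rho_def using sech_pos[of "pi * w"] pos_quad[of w] by simp

lemma rho_le: "w \<ge> 0 \<Longrightarrow> rho w \<le> 4 * exp (- (pi * w))"
proof -
  have q: "1 \<le> 1 + 4 * w^2" by simp
  have "rho w \<le> 2 * sech (pi * w) / 1"
    unfolding rho_def by (rule divide_left_mono) (use q sech_pos[of "pi * w"] pos_quad[of w] in auto)
  also have "\<dots> \<le> 2 * (2 * exp (- (pi * w)))" using sech_exp_bound[of "pi * w"] by simp
  finally show ?thesis by simp
qed

lemma cont_rho_UNIV: "continuous_on A rho"
  using cont_rho[of A "\<lambda>x. x"] by simp

lemma exp_pi_integral:
  fixes A N :: real assumes "A \<le> N"
  shows "((\<lambda>w. 4 * exp (- (pi * w))) has_integral (4/pi * exp (- (pi * A)) - 4/pi * exp (- (pi * N)))) {A..N}"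
proof -
  have "((\<lambda>w. 4 * exp (- (pi * w))) has_integral ((\<lambda>w. - (4/pi) * exp (- (pi * w))) N - (\<lambda>w. - (4/pi) * exp (- (pi * w))) A)) {A..N}"
    by (rule ftc_real[OF assms]) (auto intro!: derivative_eq_intros)
  thus ?thesis by simp
qed

lemma four_over_pi: "4 / pi \<le> 4 / (3::real)"
  by (rule divide_left_mono) (use pi_gt3 in auto)

lemma rho_int_bound:
  assumes "A \<ge> 0" shows "integral {0..A} rho \<le> 4/3"
proof -
  have "integral {0..A} rho \<le> integral {0..A} (\<lambda>w. 4 * exp (- (pi * w)))"
    by (rule integral_le) (use exp_pi_integral[OF assms] rho_le in \<open>auto intro: integrable_continuous_interval cont_rho_UNIV\<close>)
  also have "\<dots> = 4/pi * exp (- (pi * 0)) - 4/pi * exp (- (pi * A))"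
    using exp_pi_integral[OF assms] by (rule integral_unique)
  also have "\<dots> \<le> 4/pi" by simp
  also have "\<dots> \<le> 4/3" by (rule four_over_pi)
  finally show ?thesis .
qed

lemma rho_cos_tail:
  assumes "0 \<le> A" "A \<le> N"
  shows "\<bar>integral {0..N} (\<lambda>w. rho w * cos (L * w)) - integral {0..A} (\<lambda>w. rho w * cos (L * w))\<bar> \<le> 4/3 * exp (- A)"
proof -
  let ?f = "\<lambda>w. rho w * cos (L * w)"
  have int: "?f integrable_on {0..N}"
    by (intro integrable_continuous_interval continuous_intros cont_rho_UNIV)
  have "integral {0..N} ?f = integral {0..A} ?f + integral {A..N} ?f"
    using Henstock_Kurzweil_Integration.integral_combine[of 0 A N ?f] int assms by simp
  moreover have "norm (integral {A..N} ?f) \<le> integral {A..N} (\<lambda>w. 4 * exp (- (pi * w)))"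
  proof (rule integral_norm_bound_integral)
    show "?f integrable_on {A..N}" by (intro integrable_continuous_interval continuous_intros cont_rho_UNIV)
    show "(\<lambda>w. 4 * exp (- (pi * w))) integrable_on {A..N}" using exp_pi_integral[OF assms(2)] by blast
    fix w assume w: "w \<in> {A..N}"
    have "\<bar>rho w * cos (L * w)\<bar> \<le> rho w" using rho_nonneg[of w] by (simp add: abs_mult mult_left_le)
    also have "\<dots> \<le> 4 * exp (- (pi * w))" using w assms by (intro rho_le) simp
    finally show "norm (?f w) \<le> 4 * exp (- (pi * w))" by simp
  qed
  moreover have "integral {A..N} (\<lambda>w. 4 * exp (- (pi * w))) = 4/pi * exp (- (pi * A)) - 4/pi * exp (- (pi * N))"
    using exp_pi_integral[OF assms(2)] by (rule integral_unique)
  moreover have "4/pi * exp (- (pi * A)) \<le> 4/3 * exp (- A)"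
  proof (rule mult_mono)
    show "4 / pi \<le> 4 / 3" by (rule four_over_pi)
    have "A \<le> pi * A" using assms(1) pi_gt3 by (simp add: mult_le_cancel_right1)
    thus "exp (- (pi * A)) \<le> exp (- A)" by simp
  qed auto
  moreover have "4/pi * exp (- (pi * N)) \<ge> 0" by simp
  ultimately show ?thesis by (simp only: real_norm_def; linarith)
qed

lemma Phi_tail:
  assumes A: "A \<ge> 0"
  shows "\<bar>Phi L - integral {0..A} (\<lambda>w. rho w * cos (L * w))\<bar> \<le> 4/3 * exp (- A)"
proof -
  have lim: "((\<lambda>N. 4/3 * exp (- A) + 4 * exp (- (1 * N))) \<longlongrightarrow> 4/3 * exp (- A) + 4 * 0) at_top"
    by (intro tendsto_intros exp_neg_lin) simp
  have ev: "\<forall>\<^sub>F N in at_top. \<bar>Phi L - integral {0..A} (\<lambda>w. rho w * cos (L * w))\<bar> \<le> 4/3 * exp (- A) + 4 * exp (- (1 * N))"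
    using eventually_ge_at_top[of "max A 1"]
  proof eventually_elim
    case (elim N)
    have "\<bar>Phi L - integral {0..N} (\<lambda>w. rho w * cos (L * w))\<bar> \<le> 4 * exp (- N)"
      using elim by (intro Phi_approx) simp
    moreover have "\<bar>integral {0..N} (\<lambda>w. rho w * cos (L * w)) - integral {0..A} (\<lambda>w. rho w * cos (L * w))\<bar> \<le> 4/3 * exp (- A)"
      using elim A by (intro rho_cos_tail) auto
    ultimately show ?case by (smt (verit))
  qed
  from tendsto_lowerbound[OF lim ev] show ?thesis by simp
qed



definition Rb :: "real \<Rightarrow> nat \<Rightarrow> real" where
  "Rb \<Delta> j = integral {(real j - 1) * \<Delta> .. real j * \<Delta>} rho"

definition Sd :: "real \<Rightarrow> nat \<Rightarrow> real \<Rightarrow> real" where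
  "Sd \<Delta> J L = (\<Sum>j=1..J. Rb \<Delta> j * cos (wpt \<Delta> j * L))"

lemma bins_sum:
  fixes f :: "real \<Rightarrow> real"
  assumes D: "\<Delta> \<ge> 0" and f: "continuous_on UNIV f"
  shows "(\<Sum>j=1..J. integral {(real j - 1) * \<Delta> .. real j * \<Delta>} f) = integral {0..real J * \<Delta>} f"
proof (induction J)
  case 0 thus ?case by simp
next
  case (Suc J)
  have int: "f integrable_on {0..real (Suc J) * \<Delta>}"
    using f by (intro integrable_continuous_interval) (rule continuous_on_subset, auto)
  have "integral {0..real (Suc J) * \<Delta>} f = integral {0..real J * \<Delta>} f + integral {real J * \<Delta>..real (Suc J) * \<Delta>} f"
    using Henstock_Kurzweil_Integration.integral_combine[of 0 "real J * \<Delta>" "real (Suc J) * \<Delta>" f] int D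
    by (simp add: mult_right_mono)
  thus ?case using Suc by simp
qed

lemma Rb_nonneg: "\<Delta> \<ge> 0 \<Longrightarrow> Rb \<Delta> j \<ge> 0"
  unfolding Rb_def
  by (rule integral_nonneg) (auto intro: integrable_continuous_interval cont_rho_UNIV rho_nonneg)

lemma disc_bound:
  assumes D: "\<Delta> > 0"
  shows "\<bar>integral {0..real J * \<Delta>} (\<lambda>w. rho w * cos (L * w)) - Sd \<Delta> J L\<bar> \<le> 2/3 * \<Delta> * \<bar>L\<bar>"
proof -
  let ?I = "\<lambda>j. {(real j - 1) * \<Delta> .. real j * \<Delta>}"
  define D where "D = (\<lambda>j. integral (?I j) (\<lambda>w. rho w * (cos (L * w) - cos (wpt \<Delta> j * L))))"
  have c1: "continuous_on UNIV (\<lambda>w. rho w * cos (L * w))"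
    by (intro continuous_intros cont_rho_UNIV)
  have "integral {0..real J * \<Delta>} (\<lambda>w. rho w * cos (L * w)) = (\<Sum>j=1..J. integral (?I j) (\<lambda>w. rho w * cos (L * w)))"
    using bins_sum[OF _ c1, of \<Delta> J] D by simp
  moreover have "Sd \<Delta> J L = (\<Sum>j=1..J. integral (?I j) (\<lambda>w. rho w * cos (wpt \<Delta> j * L)))"
    unfolding Sd_def Rb_def by simp
  ultimately have eq: "integral {0..real J * \<Delta>} (\<lambda>w. rho w * cos (L * w)) - Sd \<Delta> J L = (\<Sum>j=1..J. D j)"
  proof -
    assume a1: "integral {0..real J * \<Delta>} (\<lambda>w. rho w * cos (L * w)) = (\<Sum>j=1..J. integral (?I j) (\<lambda>w. rho w * cos (L * w)))"
      and a2: "Sd \<Delta> J L = (\<Sum>j=1..J. integral (?I j) (\<lambda>w. rho w * cos (wpt \<Delta> j * L)))"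
    have "integral (?I j) (\<lambda>w. rho w * cos (L * w)) - integral (?I j) (\<lambda>w. rho w * cos (wpt \<Delta> j * L)) = D j" for j
    proof -
      have i1: "(\<lambda>w. rho w * cos (L * w)) integrable_on ?I j"
        by (intro integrable_continuous_interval continuous_intros cont_rho_UNIV)
      have i2: "(\<lambda>w. rho w * cos (wpt \<Delta> j * L)) integrable_on ?I j"
        by (intro integrable_continuous_interval continuous_intros cont_rho_UNIV)
      show ?thesis unfolding D_def using integral_diff[OF i1 i2] by (simp add: algebra_simps)
    qed
    thus ?thesis unfolding a1 a2 by (simp add: sum_subtractf[symmetric])
  qed
  have bD: "\<bar>D j\<bar> \<le> Rb \<Delta> j * (\<Delta>/2 * \<bar>L\<bar>)" for j
  proof -
    have "norm (D j) \<le> integral (?I j) (\<lambda>w. rho w * (\<Delta>/2 * \<bar>L\<bar>))"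
      unfolding D_def
    proof (rule integral_norm_bound_integral)
      show "(\<lambda>w. rho w * (cos (L * w) - cos (wpt \<Delta> j * L))) integrable_on ?I j"
        by (intro integrable_continuous_interval continuous_intros cont_rho_UNIV)
      show "(\<lambda>w. rho w * (\<Delta>/2 * \<bar>L\<bar>)) integrable_on ?I j"
        by (intro integrable_continuous_interval continuous_intros cont_rho_UNIV)
      fix w assume w: "w \<in> ?I j"
      have w1: "(real j - 1) * \<Delta> \<le> w" "w \<le> real j * \<Delta>" using w by auto
      have w2: "(real j - 1) * \<Delta> = real j * \<Delta> - \<Delta>" by (simp add: algebra_simps)
      have w3: "wpt \<Delta> j = real j * \<Delta> - \<Delta>/2" unfolding wpt_def by (simp add: algebra_simps)
      have "\<bar>w - wpt \<Delta> j\<bar> \<le> \<Delta>/2"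
        unfolding abs_le_iff w3 using w1 w2 by linarith
      hence "\<bar>L * w - wpt \<Delta> j * L\<bar> \<le> \<Delta>/2 * \<bar>L\<bar>"
      proof -
        assume h: "\<bar>w - wpt \<Delta> j\<bar> \<le> \<Delta>/2"
        have "\<bar>L * w - wpt \<Delta> j * L\<bar> = \<bar>L\<bar> * \<bar>w - wpt \<Delta> j\<bar>" by (simp add: abs_mult[symmetric] algebra_simps)
        also have "\<dots> \<le> \<bar>L\<bar> * (\<Delta>/2)" using h by (intro mult_left_mono) auto
        finally show ?thesis by (simp add: mult.commute)
      qed
      hence "\<bar>cos (L * w) - cos (wpt \<Delta> j * L)\<bar> \<le> \<Delta>/2 * \<bar>L\<bar>"
        using abs_cos_diff[of "L * w" "wpt \<Delta> j * L"] by linarith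
      hence "rho w * \<bar>cos (L * w) - cos (wpt \<Delta> j * L)\<bar> \<le> rho w * (\<Delta>/2 * \<bar>L\<bar>)"
        using rho_nonneg[of w] by (intro mult_left_mono) auto
      thus "norm (rho w * (cos (L * w) - cos (wpt \<Delta> j * L))) \<le> rho w * (\<Delta>/2 * \<bar>L\<bar>)"
        using rho_nonneg[of w] by (simp add: abs_mult)
    qed
    also have "\<dots> = Rb \<Delta> j * (\<Delta>/2 * \<bar>L\<bar>)" unfolding Rb_def by simp
    finally show ?thesis by simp
  qed
  have "\<bar>\<Sum>j=1..J. D j\<bar> \<le> (\<Sum>j=1..J. \<bar>D j\<bar>)" by (rule sum_abs)
  also have "\<dots> \<le> (\<Sum>j=1..J. Rb \<Delta> j * (\<Delta>/2 * \<bar>L\<bar>))" by (intro sum_mono bD)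
  also have "\<dots> = (\<Sum>j=1..J. Rb \<Delta> j) * (\<Delta>/2 * \<bar>L\<bar>)" by (simp add: sum_distrib_right)
  also have "(\<Sum>j=1..J. Rb \<Delta> j) = integral {0..real J * \<Delta>} rho"
    unfolding Rb_def using bins_sum[OF _ cont_rho_UNIV, of \<Delta> J] D by simp
  also have "integral {0..real J * \<Delta>} rho * (\<Delta>/2 * \<bar>L\<bar>) \<le> 4/3 * (\<Delta>/2 * \<bar>L\<bar>)"
    using rho_int_bound[of "real J * \<Delta>"] D by (intro mult_right_mono) auto
  finally show ?thesis unfolding eq by simp
qed



lemma term_bound:
  assumes a: "a > 0" and b: "b > 0" and D: "\<Delta> > 0"
  shows "\<bar>Kf a b - 2 * sqrt (a * b) * Sd \<Delta> J (ln a - ln b)\<bar> \<le> (a + b) * (4/3) * (exp (- (real J * \<Delta>)) + 2 * \<Delta>)"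
proof -
  define L where "L = ln a - ln b"
  define A where "A = real J * \<Delta>"
  have A: "A \<ge> 0" unfolding A_def using D by simp
  have "\<bar>Phi L - Sd \<Delta> J L\<bar> \<le> \<bar>Phi L - integral {0..A} (\<lambda>w. rho w * cos (L * w))\<bar> + \<bar>integral {0..A} (\<lambda>w. rho w * cos (L * w)) - Sd \<Delta> J L\<bar>"
    by linarith
  also have "\<dots> \<le> 4/3 * exp (- A) + 2/3 * \<Delta> * \<bar>L\<bar>"
    using Phi_tail[OF A, of L] disc_bound[OF D, of J L] unfolding A_def by linarith
  finally have p: "\<bar>Phi L - Sd \<Delta> J L\<bar> \<le> 4/3 * exp (- A) + 2/3 * \<Delta> * \<bar>L\<bar>" .
  have s0: "sqrt (a * b) \<ge> 0" using a b by simp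
  have e: "Kf a b - 2 * sqrt (a * b) * Sd \<Delta> J L = 2 * sqrt (a * b) * (Phi L - Sd \<Delta> J L)"
    unfolding K_identity[OF a b, symmetric] L_def by (simp add: right_diff_distrib)
  have "\<bar>Kf a b - 2 * sqrt (a * b) * Sd \<Delta> J L\<bar> = 2 * sqrt (a * b) * \<bar>Phi L - Sd \<Delta> J L\<bar>"
    unfolding e using s0 by (simp add: abs_mult)
  also have "\<dots> \<le> 2 * sqrt (a * b) * (4/3 * exp (- A) + 2/3 * \<Delta> * \<bar>L\<bar>)"
    using p s0 by (intro mult_left_mono) auto
  also have "\<dots> = 4/3 * exp (- A) * (2 * sqrt (a * b)) + 4/3 * \<Delta> * (sqrt (a * b) * \<bar>L\<bar>)"
    by (simp add: algebra_simps)
  also have "\<dots> \<le> 4/3 * exp (- A) * (a + b) + 4/3 * \<Delta> * (2 * (a + b))"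
    using sqrt_le_sum[of a b] sqrt_ln_bound[OF a b] a b D mult_pos_pos[OF a b] unfolding L_def
    by (intro add_mono mult_left_mono) auto
  also have "\<dots> = (a + b) * (4/3) * (exp (- A) + 2 * \<Delta>)" by (simp add: algebra_simps)
  finally show ?thesis unfolding A_def L_def .
qed

lemma tau_inner:
  assumes u: "u > 0" and v: "v > 0" and D: "\<Delta> \<ge> 0"
  shows "list_inner (tau \<Delta> u (wpt \<Delta> j) j) (tau \<Delta> v (wpt \<Delta> j) j) = 2 * sqrt (u * v) * (Rb \<Delta> j * cos (wpt \<Delta> j * (ln u - ln v)))"
proof -
  define R where "R = Rb \<Delta> j"
  define w where "w = wpt \<Delta> j"
  have R: "R \<ge> 0" unfolding R_def using Rb_nonneg[OF D] .
  have "list_inner (tau \<Delta> u w j) (tau \<Delta> v w j) =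
     sqrt (2 * u * R) * sqrt (2 * v * R) * (cos (w * ln u) * cos (w * ln v) + sin (w * ln u) * sin (w * ln v))"
    unfolding tau_def list_inner_def R_def Rb_def using u v by (simp add: algebra_simps)
  also have "sqrt (2 * u * R) * sqrt (2 * v * R) = 2 * sqrt (u * v) * R"
  proof -
    have "sqrt (2 * u * R) * sqrt (2 * v * R) = sqrt ((2 * R)^2 * (u * v))"
      by (simp add: real_sqrt_mult[symmetric] algebra_simps power2_eq_square)
    also have "\<dots> = 2 * R * sqrt (u * v)" using R by (simp add: real_sqrt_mult)
    finally show ?thesis by simp
  qed
  also have "cos (w * ln u) * cos (w * ln v) + sin (w * ln u) * sin (w * ln v) = cos (w * (ln u - ln v))"
    by (simp add: cos_diff right_diff_distrib)
  finally show ?thesis unfolding R_def w_def by (simp add: mult.commute)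
qed

definition Tt :: "real \<Rightarrow> nat \<Rightarrow> real \<Rightarrow> real \<Rightarrow> real" where
  "Tt \<Delta> J u v = (\<Sum>j=1..J. list_inner (tau \<Delta> u (wpt \<Delta> j) j) (tau \<Delta> v (wpt \<Delta> j) j))"

lemma Tt_pos: "u > 0 \<Longrightarrow> v > 0 \<Longrightarrow> \<Delta> \<ge> 0 \<Longrightarrow> Tt \<Delta> J u v = 2 * sqrt (u * v) * Sd \<Delta> J (ln u - ln v)"
  unfolding Tt_def Sd_def by (simp add: tau_inner sum_distrib_left)

lemma Tt_zero: assumes "u = 0 \<or> v = 0" shows "Tt \<Delta> J u v = 0"
proof -
  have "list_inner (tau \<Delta> u (wpt \<Delta> j) j) (tau \<Delta> v (wpt \<Delta> j) j) = 0" for j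
    using assms unfolding tau_def list_inner_def by (cases "u = 0"; cases "v = 0") auto
  thus ?thesis unfolding Tt_def by simp
qed

lemma Kf_zero: "u = 0 \<or> v = 0 \<Longrightarrow> Kf u v = 0"
  unfolding Kf_def gl_def by auto

lemma term_bound':
  assumes a: "a \<ge> 0" and b: "b \<ge> 0" and D: "\<Delta> > 0"
  shows "\<bar>Kf a b - Tt \<Delta> J a b\<bar> \<le> (a + b) * (4/3) * (exp (- (real J * \<Delta>)) + 2 * \<Delta>)"
proof (cases "a = 0 \<or> b = 0")
  case True
  thus ?thesis using Tt_zero[OF True] Kf_zero[OF True] a b D by simp
next
  case False
  hence "a > 0" "b > 0" using a b by auto
  thus ?thesis using term_bound[OF _ _ D] Tt_pos[of a b \<Delta> J] D by simp
qed

lemma li_append: "length u1 = length v1 \<Longrightarrow> list_inner (u1 @ u2) (v1 @ v2) = list_inner u1 v1 + list_inner u2 v2"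
  unfolding list_inner_def by (simp add: zip_append)

lemma li_concat:
  "(\<forall>z\<in>set xs. length (f z) = length (g z)) \<Longrightarrow>
   list_inner (concat (map f xs)) (concat (map g xs)) = (\<Sum>z\<leftarrow>xs. list_inner (f z) (g z))"
  by (induction xs) (simp_all add: li_append, simp add: list_inner_def)

lemma li_neg: "list_inner u (map uminus v) = - list_inner u v"
proof (induction u arbitrary: v)
  case Nil thus ?case by (simp add: list_inner_def)
next
  case (Cons a u)
  thus ?case by (cases v) (auto simp: list_inner_def)
qed

lemma len_tau [simp]: "length (tau \<Delta> u w j) = 2"
  unfolding tau_def by simp

lemma len_concat_tau: "length (concat (map (\<lambda>j. tau \<Delta> (f j) (wpt \<Delta> j) j) xs)) = 2 * length xs"
  by (induction xs) auto

lemma sum_list_upt1: "(\<Sum>j\<leftarrow>[1..<J+1]. f j) = (\<Sum>j=1..J. (f j :: real))"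
proof -
  have "(\<Sum>j\<leftarrow>[1..<J+1]. f j) = sum f (set [1..<J+1])"
    by (rule sum_list_distinct_conv_sum_set) (rule distinct_upt)
  also have "set [1..<J+1] = {1..J}" by auto
  finally show ?thesis .
qed

lemma sum_list_enum: "(\<Sum>c\<leftarrow>(Enum.enum :: 'c::enum list). f c) = (\<Sum>c\<in>UNIV. (f c :: real))"
  by (simp add: sum_list_distinct_conv_sum_set enum_distinct UNIV_enum)

lemma eta_inner:
  fixes p :: "'c::enum \<Rightarrow> 'x \<Rightarrow> real"
  shows "list_inner (eta1 \<Delta> J p x) (eta2 \<Delta> J p y) =
     Tt \<Delta> J (\<Sum>c\<in>UNIV. p c x) (\<Sum>c\<in>UNIV. p c y) - (\<Sum>c\<in>UNIV. Tt \<Delta> J (p c x) (p c y))"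
proof -
  define f1 where "f1 = (\<lambda>j. tau \<Delta> (\<Sum>c\<in>UNIV. p c x) (wpt \<Delta> j) j)"
  define g1 where "g1 = (\<lambda>j. tau \<Delta> (\<Sum>c\<in>UNIV. p c y) (wpt \<Delta> j) j)"
  define f2 where "f2 = (\<lambda>j. concat (map (\<lambda>c. tau \<Delta> (p c x) (wpt \<Delta> j) j) (Enum.enum :: 'c list)))"
  define g2 where "g2 = (\<lambda>j. concat (map (\<lambda>c. map uminus (tau \<Delta> (p c y) (wpt \<Delta> j) j)) (Enum.enum :: 'c list)))"
  have e1: "eta1 \<Delta> J p x = concat (map f1 [1..<J+1]) @ concat (map f2 [1..<J+1])"
    unfolding eta1_def f1_def f2_def ..
  have e2: "eta2 \<Delta> J p y = concat (map g1 [1..<J+1]) @ concat (map g2 [1..<J+1])"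
    unfolding eta2_def g1_def g2_def ..
  have l1: "length (concat (map f1 [1..<J+1])) = length (concat (map g1 [1..<J+1]))"
    unfolding f1_def g1_def by (simp add: len_concat_tau)
  have lf2: "length (f2 j) = length (g2 j)" for j
  proof -
    have "length (concat (map (\<lambda>c. tau \<Delta> (p c x) (wpt \<Delta> j) j) xs)) =
          length (concat (map (\<lambda>c. map uminus (tau \<Delta> (p c y) (wpt \<Delta> j) j)) xs))" for xs :: "'c list"
      by (induction xs) auto
    thus ?thesis unfolding f2_def g2_def .
  qed
  have p1: "list_inner (concat (map f1 [1..<J+1])) (concat (map g1 [1..<J+1])) = Tt \<Delta> J (\<Sum>c\<in>UNIV. p c x) (\<Sum>c\<in>UNIV. p c y)"
  proof -
    have "list_inner (concat (map f1 [1..<J+1])) (concat (map g1 [1..<J+1])) = (\<Sum>z\<leftarrow>[1..<J+1]. list_inner (f1 z) (g1 z))"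
      by (rule li_concat) (simp add: f1_def g1_def)
    also have "\<dots> = Tt \<Delta> J (\<Sum>c\<in>UNIV. p c x) (\<Sum>c\<in>UNIV. p c y)"
      unfolding sum_list_upt1 Tt_def f1_def g1_def ..
    finally show ?thesis .
  qed
  have inner2: "list_inner (f2 j) (g2 j) = - (\<Sum>c\<in>UNIV. list_inner (tau \<Delta> (p c x) (wpt \<Delta> j) j) (tau \<Delta> (p c y) (wpt \<Delta> j) j))" for j
    unfolding f2_def g2_def
    by (subst li_concat) (auto simp: li_neg sum_list_enum sum_negf)
  have p2: "list_inner (concat (map f2 [1..<J+1])) (concat (map g2 [1..<J+1])) = - (\<Sum>c\<in>UNIV. Tt \<Delta> J (p c x) (p c y))"
  proof -
    have "list_inner (concat (map f2 [1..<J+1])) (concat (map g2 [1..<J+1])) = (\<Sum>j=1..J. list_inner (f2 j) (g2 j))"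
    proof -
      have "list_inner (concat (map f2 [1..<J+1])) (concat (map g2 [1..<J+1])) = (\<Sum>z\<leftarrow>[1..<J+1]. list_inner (f2 z) (g2 z))"
        by (rule li_concat) (simp add: lf2)
      thus ?thesis unfolding sum_list_upt1 .
    qed
    also have "\<dots> = - (\<Sum>j=1..J. \<Sum>c\<in>UNIV. list_inner (tau \<Delta> (p c x) (wpt \<Delta> j) j) (tau \<Delta> (p c y) (wpt \<Delta> j) j))"
      unfolding inner2 by (simp add: sum_negf)
    also have "\<dots> = - (\<Sum>c\<in>UNIV. Tt \<Delta> J (p c x) (p c y))"
      unfolding Tt_def by (subst sum.swap) simp
    finally show ?thesis .
  qed
  show ?thesis unfolding e1 e2 li_append[OF l1] p1 p2 by simp
qed



lemma gl_zero [simp]: "gl 0 = 0" unfolding gl_def by simp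

lemma MI_decomp:
  fixes q :: "'c::finite \<Rightarrow> 'u::finite \<Rightarrow> real"
  assumes nn: "\<And>c u. q c u \<ge> 0"
  shows "mutual_inf q = (\<Sum>u\<in>UNIV. \<Sum>c\<in>UNIV. gl (q c u)) - (\<Sum>u\<in>UNIV. gl (marg_X q u)) - (\<Sum>c\<in>UNIV. gl (marg_C q c))"
proof -
  have tm: "(if q c u = 0 then 0 else q c u * ln (q c u / (marg_X q u * marg_C q c)))
      = gl (q c u) - q c u * ln (marg_X q u) - q c u * ln (marg_C q c)" for c u
  proof (cases "q c u = 0")
    case True thus ?thesis by simp
  next
    case False
    hence qp: "q c u > 0" using nn[of c u] by simp
    have "q c u \<le> marg_X q u" unfolding marg_X_def by (rule member_le_sum) (use nn in auto)
    hence X: "marg_X q u > 0" using qp by simp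
    have "q c u \<le> marg_C q c" unfolding marg_C_def by (rule member_le_sum) (use nn in auto)
    hence C: "marg_C q c > 0" using qp by simp
    have lneq: "ln (q c u / (marg_X q u * marg_C q c)) = ln (q c u) - ln (marg_X q u) - ln (marg_C q c)"
      using qp X C by (simp add: ln_div ln_mult)
    have "q c u * ln (q c u / (marg_X q u * marg_C q c)) = gl (q c u) - q c u * ln (marg_X q u) - q c u * ln (marg_C q c)"
      unfolding gl_def lneq by (simp add: right_diff_distrib)
    thus ?thesis using False by simp
  qed
  have s1: "(\<Sum>u\<in>UNIV. \<Sum>c\<in>UNIV. q c u * ln (marg_X q u)) = (\<Sum>u\<in>UNIV. gl (marg_X q u))"
    unfolding gl_def marg_X_def by (simp add: sum_distrib_right)
  have s2: "(\<Sum>u\<in>UNIV. \<Sum>c\<in>UNIV. q c u * ln (marg_C q c)) = (\<Sum>c\<in>UNIV. gl (marg_C q c))"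
    by (subst sum.swap) (simp add: gl_def marg_C_def sum_distrib_right)
  show ?thesis unfolding mutual_inf_def tm
    by (simp add: sum_subtractf s1 s2)
qed

definition hm :: "('x \<Rightarrow> real) \<Rightarrow> 'x \<Rightarrow> 'x \<Rightarrow> 'x option \<Rightarrow> real" where
  "hm h x y u = (case u of None \<Rightarrow> h x + h y | Some z \<Rightarrow> if z = x \<or> z = y then 0 else h z)"

lemma merge_sum:
  fixes h :: "'x::finite \<Rightarrow> real" and \<phi> :: "real \<Rightarrow> real"
  assumes xy: "x \<noteq> y" and z: "\<phi> 0 = 0"
  shows "(\<Sum>z\<in>UNIV. \<phi> (h z)) - (\<Sum>u\<in>UNIV. \<phi> (hm h x y u)) = \<phi> (h x) + \<phi> (h y) - \<phi> (h x + h y)"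
proof -
  have A: "(\<Sum>z\<in>UNIV. g z) = (\<Sum>z\<in>UNIV - {x,y}. g z) + g x + g y" for g :: "'x \<Rightarrow> real"
  proof -
    have "(\<Sum>z\<in>UNIV. g z) = (\<Sum>z\<in>UNIV - {x,y}. g z) + (\<Sum>z\<in>{x,y}. g z)"
      by (rule sum.subset_diff) auto
    thus ?thesis using xy by simp
  qed
  have "(\<Sum>u\<in>UNIV. \<phi> (hm h x y u)) = \<phi> (hm h x y None) + (\<Sum>u\<in>range Some. \<phi> (hm h x y u))"
    by (simp add: UNIV_option_conv sum.insert)
  also have "(\<Sum>u\<in>range Some. \<phi> (hm h x y u)) = (\<Sum>z\<in>UNIV. \<phi> (hm h x y (Some z)))"
    by (subst sum.reindex) (auto simp: inj_on_def)
  also have "\<dots> = (\<Sum>z\<in>UNIV - {x,y}. \<phi> (h z))"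
  proof -
    have "(\<Sum>z\<in>UNIV. \<phi> (hm h x y (Some z))) = (\<Sum>z\<in>UNIV - {x,y}. \<phi> (hm h x y (Some z))) + \<phi> (hm h x y (Some x)) + \<phi> (hm h x y (Some y))"
      by (rule A)
    moreover have "(\<Sum>z\<in>UNIV - {x,y}. \<phi> (hm h x y (Some z))) = (\<Sum>z\<in>UNIV - {x,y}. \<phi> (h z))"
      by (rule sum.cong) (auto simp: hm_def)
    ultimately show ?thesis using z by (simp add: hm_def)
  qed
  finally have B: "(\<Sum>u\<in>UNIV. \<phi> (hm h x y u)) = \<phi> (h x + h y) + (\<Sum>z\<in>UNIV - {x,y}. \<phi> (h z))"
    by (simp add: hm_def)
  show ?thesis unfolding B A[of "\<lambda>z. \<phi> (h z)"] by simp
qed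

lemma merged_hm:
  fixes p :: "'c \<Rightarrow> 'x::finite \<Rightarrow> real"
  assumes xy: "x \<noteq> y"
  shows "merged_dist p x y c = hm (p c) x y"
proof
  fix u
  show "merged_dist p x y c u = hm (p c) x y u"
  proof (cases u)
    case None
    have "{z. merge_map x y z = u} = {x, y}" using None by (auto simp: merge_map_def)
    thus ?thesis unfolding merged_dist_def hm_def using None xy by simp
  next
    case (Some z0)
    have "{z. merge_map x y z = u} = (if z0 = x \<or> z0 = y then {} else {z0})"
      using Some by (auto simp: merge_map_def)
    thus ?thesis unfolding merged_dist_def hm_def using Some by simp
  qed
qed

lemma margX_merged:
  fixes p :: "'c::finite \<Rightarrow> 'x::finite \<Rightarrow> real"
  assumes xy: "x \<noteq> y"
  shows "marg_X (merged_dist p x y) = hm (marg_X p) x y"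
proof
  fix u
  show "marg_X (merged_dist p x y) u = hm (marg_X p) x y u"
    unfolding marg_X_def merged_hm[OF xy] hm_def
    by (cases u) (simp_all add: sum.distrib)
qed

lemma margC_merged:
  fixes p :: "'c::finite \<Rightarrow> 'x::finite \<Rightarrow> real"
  assumes xy: "x \<noteq> y"
  shows "marg_C (merged_dist p x y) = marg_C p"
proof
  fix c
  have "(\<Sum>z\<in>UNIV. id (p c z)) - (\<Sum>u\<in>UNIV. id (hm (p c) x y u)) = id (p c x) + id (p c y) - id (p c x + p c y)"
    by (rule merge_sum[OF xy]) simp
  thus "marg_C (merged_dist p x y) c = marg_C p c"
    unfolding marg_C_def merged_hm[OF xy] by simp
qed

lemma MIL_decomp:
  fixes p :: "'c::finite \<Rightarrow> 'x::finite \<Rightarrow> real"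
  assumes nn: "\<And>c x. p c x \<ge> 0" and xy: "x \<noteq> y"
  shows "MIL p x y = Kf (marg_X p x) (marg_X p y) - (\<Sum>c\<in>UNIV. Kf (p c x) (p c y))"
proof -
  have nnm: "merged_dist p x y c u \<ge> 0" for c u
    unfolding merged_dist_def by (rule sum_nonneg) (use nn in auto)
  have d1: "(\<Sum>z\<in>UNIV. gl (p c z)) - (\<Sum>u\<in>UNIV. gl (merged_dist p x y c u)) = - Kf (p c x) (p c y)" for c
    unfolding merged_hm[OF xy] using merge_sum[OF xy, of gl "p c"] by (simp add: Kf_def)
  have d2: "(\<Sum>z\<in>UNIV. gl (marg_X p z)) - (\<Sum>u\<in>UNIV. gl (marg_X (merged_dist p x y) u)) = - Kf (marg_X p x) (marg_X p y)"
    unfolding margX_merged[OF xy] using merge_sum[OF xy, of gl "marg_X p"] by (simp add: Kf_def)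
  have sw1: "(\<Sum>z\<in>UNIV. \<Sum>c\<in>UNIV. gl (p c z)) = (\<Sum>c\<in>UNIV. \<Sum>z\<in>UNIV. gl (p c z))" by (rule sum.swap)
  have sw2: "(\<Sum>u\<in>UNIV. \<Sum>c\<in>UNIV. gl (merged_dist p x y c u)) = (\<Sum>c\<in>UNIV. \<Sum>u\<in>UNIV. gl (merged_dist p x y c u))" by (rule sum.swap)
  have "(\<Sum>c\<in>UNIV. \<Sum>z\<in>UNIV. gl (p c z)) - (\<Sum>c\<in>UNIV. \<Sum>u\<in>UNIV. gl (merged_dist p x y c u)) = (\<Sum>c\<in>UNIV. - Kf (p c x) (p c y))"
    unfolding sum_subtractf[symmetric] using d1 by simp
  thus ?thesis
    unfolding MIL_def MI_decomp[OF nn] MI_decomp[OF nnm] margC_merged[OF xy] sw1 sw2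
    using d2 by (simp add: sum_negf)
qed

theorem mainTheorem11:
  fixes p :: "'c::enum \<Rightarrow> 'x::finite \<Rightarrow> real"
    and \<epsilon> \<Delta> :: real and J :: nat
  assumes p_nonneg: "\<forall>c x. p c x \<ge> 0"
    and p_sum: "(\<Sum>c\<in>UNIV. \<Sum>x\<in>UNIV. p c x) = 1"
    and eps_pos: "\<epsilon> > 0"
    and Delta_def: "\<Delta> = \<epsilon> / (4 * (1 + real CARD('c)))"
    and J_pos: "J > 0"
    and J_bound: "real J \<ge> 4 * (1 + real CARD('c)) / \<epsilon> * ln (8 * (1 + real CARD('c)) / \<epsilon>)"
  shows "\<forall>x y. x \<noteq> y \<longrightarrow>
           \<bar>MIL p x y - list_inner (eta1 \<Delta> J p x) (eta2 \<Delta> J p y)\<bar> \<le> \<epsilon>"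
proof (intro allI impI)
  fix x y :: 'x assume xy: "x \<noteq> y"
  have nn: "\<And>c x. p c x \<ge> 0" using p_nonneg by blast
  define C where "C = real CARD('c)"
  have C1: "C \<ge> 1" unfolding C_def by simp
  have D: "\<Delta> > 0" unfolding Delta_def using eps_pos C1 C_def by simp
  define E where "E = (4/3) * (exp (- (real J * \<Delta>)) + 2 * \<Delta>)"
  have E0: "E \<ge> 0" unfolding E_def using D by simp
  define a where "a = marg_X p x"
  define b where "b = marg_X p y"
  have a0: "a \<ge> 0" and b0: "b \<ge> 0" unfolding a_def b_def marg_X_def by (auto intro: sum_nonneg nn)
  have aeq: "a = (\<Sum>c\<in>UNIV. p c x)" and beq: "b = (\<Sum>c\<in>UNIV. p c y)" unfolding a_def b_def marg_X_def by auto
  have main: "MIL p x y - list_inner (eta1 \<Delta> J p x) (eta2 \<Delta> J p y) =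
      (Kf a b - Tt \<Delta> J a b) - (\<Sum>c\<in>UNIV. Kf (p c x) (p c y) - Tt \<Delta> J (p c x) (p c y))"
    unfolding MIL_decomp[OF nn xy] eta_inner a_def[symmetric] b_def[symmetric] aeq[symmetric] beq[symmetric]
    by (simp add: sum_subtractf)
  have "\<bar>MIL p x y - list_inner (eta1 \<Delta> J p x) (eta2 \<Delta> J p y)\<bar> \<le>
      \<bar>Kf a b - Tt \<Delta> J a b\<bar> + (\<Sum>c\<in>UNIV. \<bar>Kf (p c x) (p c y) - Tt \<Delta> J (p c x) (p c y)\<bar>)"
    unfolding main using sum_abs[of "\<lambda>c. Kf (p c x) (p c y) - Tt \<Delta> J (p c x) (p c y)" UNIV] by linarith
  also have "\<dots> \<le> (a + b) * E + (\<Sum>c\<in>UNIV. (p c x + p c y) * E)"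
  proof -
    have tb: "\<bar>Kf u v - Tt \<Delta> J u v\<bar> \<le> (u + v) * E" if "u \<ge> 0" "v \<ge> 0" for u v
      using term_bound'[OF that D, of J] unfolding E_def by (simp only: mult.assoc)
    show ?thesis by (intro add_mono sum_mono tb a0 b0 nn)
  qed
  also have "(\<Sum>c\<in>UNIV. (p c x + p c y) * E) = (a + b) * E"
    unfolding aeq beq by (simp only: sum_distrib_right[symmetric] sum.distrib)
  finally have bnd: "\<bar>MIL p x y - list_inner (eta1 \<Delta> J p x) (eta2 \<Delta> J p y)\<bar> \<le> 2 * (a + b) * E" by (simp add: algebra_simps)
  have ab1: "a + b \<le> 1"
  proof -
    have "a + b = (\<Sum>z\<in>{x,y}. marg_X p z)" using xy unfolding a_def b_def by simp
    also have "\<dots> \<le> (\<Sum>z\<in>UNIV. marg_X p z)"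
      by (rule sum_mono2) (auto simp: marg_X_def intro: sum_nonneg nn)
    also have "\<dots> = 1" unfolding marg_X_def using p_sum by (subst sum.swap) simp
    finally show ?thesis .
  qed
  have JD: "real J * \<Delta> \<ge> ln (8 * (1 + C) / \<epsilon>)"
  proof -
    have "real J * \<Delta> \<ge> 4 * (1 + C) / \<epsilon> * ln (8 * (1 + C) / \<epsilon>) * \<Delta>"
      using J_bound D unfolding C_def by (intro mult_right_mono) auto
    also have "4 * (1 + C) / \<epsilon> * ln (8 * (1 + C) / \<epsilon>) * \<Delta> = ln (8 * (1 + C) / \<epsilon>)"
    proof -
      have k: "4 * (1 + C) / \<epsilon> * (\<epsilon> / (4 * (1 + C))) = 1" using eps_pos C1 by simp
      have "4 * (1 + C) / \<epsilon> * ln (8 * (1 + C) / \<epsilon>) * \<Delta> = (4 * (1 + C) / \<epsilon> * \<Delta>) * ln (8 * (1 + C) / \<epsilon>)"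
        by (simp only: mult_ac)
      also have "4 * (1 + C) / \<epsilon> * \<Delta> = 1" unfolding Delta_def C_def[symmetric] by (rule k)
      finally show ?thesis by simp
    qed
    finally show ?thesis .
  qed
  have ex: "exp (- (real J * \<Delta>)) \<le> \<epsilon> / (8 * (1 + C))"
  proof -
    have pos: "8 * (1 + C) / \<epsilon> > 0" using eps_pos C1 by simp
    have "exp (- (real J * \<Delta>)) \<le> exp (- ln (8 * (1 + C) / \<epsilon>))" using JD by simp
    also have "\<dots> = \<epsilon> / (8 * (1 + C))" using pos by (simp add: exp_minus)
    finally show ?thesis .
  qed
  have E2: "2 * E \<le> \<epsilon>"
  proof -
    have "2 * E \<le> 8/3 * (\<epsilon> / (8 * (1 + C)) + 2 * (\<epsilon> / (4 * (1 + C))))"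
      unfolding E_def Delta_def C_def[symmetric] using ex unfolding Delta_def C_def[symmetric] by simp
    also have "\<dots> = 5/3 * \<epsilon> / (1 + C)"
    proof -
      define t where "t = \<epsilon> / (1 + C)"
      have f1: "\<epsilon> / (8 * (1 + C)) = t / 8" unfolding t_def by simp
      have f2: "\<epsilon> / (4 * (1 + C)) = t / 4" unfolding t_def by simp
      have f3: "5/3 * \<epsilon> / (1 + C) = 5/3 * t" unfolding t_def by simp
      show ?thesis unfolding f1 f2 f3 by simp
    qed
    also have "\<dots> \<le> \<epsilon>"
    proof -
      have "5/3 * \<epsilon> \<le> \<epsilon> * (1 + C)" using C1 eps_pos by (simp add: algebra_simps)
      thus ?thesis using C1 by (simp add: divide_le_eq algebra_simps)
    qed
    finally show ?thesis .
  qed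
  have "2 * (a + b) * E \<le> 2 * 1 * E" using ab1 a0 b0 E0 by (intro mult_right_mono mult_left_mono) auto
  thus "\<bar>MIL p x y - list_inner (eta1 \<Delta> J p x) (eta2 \<Delta> J p y)\<bar> \<le> \<epsilon>" using bnd E2 by linarith
qed

end
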